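(* The game operator $F$ is Lipschitz continuous: there is a constant $\gamma$ with $\|F(Z)-F(Z')\|_*\le\gamma\|Z-Z'\|$ for all joint states $Z,Z'$. Specifically, with $d=n+m$: for the Frobenius norm pair ($\|\cdot\|=\|\cdot\|_*=\|\cdot\|_F$) one may take $\gamma=O(2^d)$, and for the pair $\|\cdot\|=\|\cdot\|_1$ (Schatten-1/trace norm), $\|\cdot\|_*=\|\cdot\|_\infty$ (operator norm) one may take $\gamma=O(1)$.
   Context: Alice's strategy set is $\mathcal{A}=\{\alpha\in\mathbb{C}^{2^n\times 2^n}:\alpha\succeq0,\ \operatorname{Tr}\alpha=1\}$ and Bob's is $\mathcal{B}=\{\beta\in\mathbb{C}^{2^m\times 2^m}:\beta\succeq0,\ \operatorname{Tr}\beta=1\}$; joint states are pairs $Z=(\alpha,\beta)$, identified with block-diagonal matrices $\mathrm{diag}(\alpha,\beta)$ for the purpose of norms. Given a POVM $\{P_\omega\}_{\omega\in\Omega}$ on $n+m$ qubits with finite $\Omega$ and a finite-valued utility $u:\Omega\to[-1,1]$, the payoff observable is $U=\sum_\omega u(\omega)P_\omega$, and $F(\alpha,\beta)=(\operatorname{Tr}_{\mathcal B}[U^\dagger(I_{2^n}\otimes\beta)],\ -\operatorname{Tr}_{\mathcal A}[U^\dagger(\alpha\otimes I_{2^m})])$, with $\operatorname{Tr}_{\mathcal A},\operatorname{Tr}_{\mathcal B}$ the partial traces over Alice's and Bob's subsystems. The $O(\cdot)$ bounds are in terms of $d$, uniformly over such games. *)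

theory Defs
  imports "Jordan_Normal_Form.Char_Poly"
begin

definition mtrace :: "complex mat \<Rightarrow> complex" where
  "mtrace A = (\<Sum>i<dim_row A. A $$ (i, i))"

definition madj :: "complex mat \<Rightarrow> complex mat" where
  "madj A = mat (dim_col A) (dim_row A) (\<lambda>(i, j). cnj (A $$ (j, i)))"

definition psd :: "nat \<Rightarrow> complex mat \<Rightarrow> bool" where
  "psd N A \<longleftrightarrow> A \<in> carrier_mat N N \<and> madj A = A \<and>
     (\<forall>v \<in> carrier_vec N. Im (map_vec cnj v \<bullet> (A *\<^sub>v v)) = 0 \<and>
                            0 \<le> Re (map_vec cnj v \<bullet> (A *\<^sub>v v)))"

definition density :: "nat \<Rightarrow> complex mat \<Rightarrow> bool" where
  "density N A \<longleftrightarrow> psd N A \<and> mtrace A = 1"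

definition kron :: "complex mat \<Rightarrow> complex mat \<Rightarrow> complex mat" where
  "kron A B = mat (dim_row A * dim_row B) (dim_col A * dim_col B)
     (\<lambda>(i, j). A $$ (i div dim_row B, j div dim_col B) * B $$ (i mod dim_row B, j mod dim_col B))"

text \<open>Partial traces on a bipartite system of dimensions a (first factor, Alice) and
  b (second factor, Bob); index i*b+k corresponds to basis vector e_i \<otimes> e_k.\<close>
definition ptrace_B :: "nat \<Rightarrow> nat \<Rightarrow> complex mat \<Rightarrow> complex mat" where
  "ptrace_B a b M = mat a a (\<lambda>(i, j). \<Sum>k<b. M $$ (i * b + k, j * b + k))"

definition ptrace_A :: "nat \<Rightarrow> nat \<Rightarrow> complex mat \<Rightarrow> complex mat" where
  "ptrace_A a b M = mat b b (\<lambda>(i, j). \<Sum>k<a. M $$ (k * b + i, k * b + j))"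

definition blockdiag :: "complex mat \<Rightarrow> complex mat \<Rightarrow> complex mat" where
  "blockdiag A B = four_block_mat A (0\<^sub>m (dim_row A) (dim_col B)) (0\<^sub>m (dim_row B) (dim_col A)) B"

definition frob_norm :: "complex mat \<Rightarrow> real" where
  "frob_norm A = sqrt (\<Sum>i<dim_row A. \<Sum>j<dim_col A. (cmod (A $$ (i, j)))\<^sup>2)"

definition cvec_norm :: "complex vec \<Rightarrow> real" where
  "cvec_norm v = sqrt (\<Sum>i<dim_vec v. (cmod (v $ i))\<^sup>2)"

definition op_norm :: "complex mat \<Rightarrow> real" where
  "op_norm A = Sup {cvec_norm (A *\<^sub>v v) | v. v \<in> carrier_vec (dim_col A) \<and> cvec_norm v \<le> 1}"

text \<open>Trace norm (Schatten-1 norm): sum of singular values, i.e. of the square roots of the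
  eigenvalues (with multiplicity) of A^* A.\<close>
definition trace_norm :: "complex mat \<Rightarrow> real" where
  "trace_norm A = sum_mset (image_mset (\<lambda>x. sqrt (Re x)) (proots (char_poly (madj A * A))))"

definition povm :: "nat \<Rightarrow> nat set \<Rightarrow> (nat \<Rightarrow> complex mat) \<Rightarrow> bool" where
  "povm N Omega P \<longleftrightarrow> finite Omega \<and> (\<forall>w\<in>Omega. psd N (P w)) \<and>
     (\<forall>i<N. \<forall>j<N. (\<Sum>w\<in>Omega. P w $$ (i, j)) = (1\<^sub>m N) $$ (i, j))"

definition payoff_obs :: "nat \<Rightarrow> nat set \<Rightarrow> (nat \<Rightarrow> complex mat) \<Rightarrow> (nat \<Rightarrow> real) \<Rightarrow> complex mat" where
  "payoff_obs N Omega P u = mat N N (\<lambda>(i, j). \<Sum>w\<in>Omega. complex_of_real (u w) * P w $$ (i, j))"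

definition game_F :: "nat \<Rightarrow> nat \<Rightarrow> complex mat \<Rightarrow> complex mat \<Rightarrow> complex mat \<Rightarrow> complex mat \<times> complex mat" where
  "game_F n m U \<alpha> \<beta> =
     (ptrace_B (2^n) (2^m) (madj U * kron (1\<^sub>m (2^n)) \<beta>),
      - ptrace_A (2^n) (2^m) (madj U * kron \<alpha> (1\<^sub>m (2^m))))"

end

theory Submission
  imports Defs "Jordan_Normal_Form.Schur_Decomposition"
begin

definition nsq :: "nat \<Rightarrow> (nat \<Rightarrow> complex) \<Rightarrow> real" where
  "nsq N x = (\<Sum>i<N. (cmod (x i))^2)"

definition bil :: "nat \<Rightarrow> nat \<Rightarrow> complex mat \<Rightarrow> (nat \<Rightarrow> complex) \<Rightarrow> (nat \<Rightarrow> complex) \<Rightarrow> complex" where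
  "bil r c A x z = (\<Sum>i<r. \<Sum>j<c. cnj (x i) * A $$ (i, j) * z j)"

lemma nsq_nonneg: "0 \<le> nsq N x"
  unfolding nsq_def by (simp add: sum_nonneg)

lemma psd_carrier: "psd N A \<Longrightarrow> A \<in> carrier_mat N N"
  unfolding psd_def by auto

lemma psd_herm:
  assumes "psd N A" "i < N" "j < N"
  shows "A $$ (j, i) = cnj (A $$ (i, j))"
proof -
  from assms have A: "A \<in> carrier_mat N N" and h: "madj A = A" unfolding psd_def by auto
  have "A $$ (j, i) = madj A $$ (j, i)" using h by simp
  also have "\<dots> = cnj (A $$ (i, j))" using A assms(2,3) unfolding madj_def by auto
  finally show ?thesis .
qed

lemma psd_qf:
  assumes "psd N A"
  shows "Im (bil N N A x x) = 0 \<and> 0 \<le> Re (bil N N A x x)"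
proof -
  from assms have A: "A \<in> carrier_mat N N" unfolding psd_def by auto
  let ?v = "vec N x"
  have v: "?v \<in> carrier_vec N" by simp
  have eq: "map_vec cnj ?v \<bullet> (A *\<^sub>v ?v) = bil N N A x x"
    using A unfolding scalar_prod_def mult_mat_vec_def bil_def
    by (simp add: sum_distrib_left mult.assoc atLeast0LessThan row_def)
  from assms v have "Im (map_vec cnj ?v \<bullet> (A *\<^sub>v ?v)) = 0 \<and> 0 \<le> Re (map_vec cnj ?v \<bullet> (A *\<^sub>v ?v))"
    unfolding psd_def by blast
  then show ?thesis using eq by simp
qed

lemma bil_expand:
  "bil N N A (\<lambda>i. x i + t * z i) (\<lambda>i. x i + t * z i) =
     bil N N A x x + t * bil N N A x z + cnj t * bil N N A z x + (cnj t * t) * bil N N A z z"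
proof -
  have e: "\<And>i j. cnj (x i + t * z i) * A $$ (i, j) * (x j + t * z j) =
     cnj (x i) * A $$ (i, j) * x j + t * (cnj (x i) * A $$ (i, j) * z j)
     + cnj t * (cnj (z i) * A $$ (i, j) * x j) + cnj t * t * (cnj (z i) * A $$ (i, j) * z j)"
    by (simp add: algebra_simps)
  show ?thesis unfolding bil_def e sum.distrib sum_distrib_left by simp
qed

lemma bil_herm:
  assumes "psd N A"
  shows "bil N N A z x = cnj (bil N N A x z)"
proof -
  have "cnj (bil N N A x z) = (\<Sum>i<N. \<Sum>j<N. x i * cnj (A $$ (i, j)) * cnj (z j))"
    unfolding bil_def by (simp add: cnj_sum)
  also have "\<dots> = (\<Sum>i<N. \<Sum>j<N. x i * A $$ (j, i) * cnj (z j))"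
  proof (intro sum.cong refl)
    fix i j assume "i \<in> {..<N}" "j \<in> {..<N}"
    then show "x i * cnj (A $$ (i, j)) * cnj (z j) = x i * A $$ (j, i) * cnj (z j)"
      using psd_herm[OF assms, of i j] by simp
  qed
  also have "\<dots> = bil N N A z x"
    unfolding bil_def by (subst sum.swap) (simp add: mult.commute mult.left_commute)
  finally show ?thesis by simp
qed

lemma psd_bil_bound:
  assumes "psd N A"
  shows "cmod (bil N N A x z) \<le> (Re (bil N N A x x) + Re (bil N N A z z)) / 2"
proof (cases "bil N N A x z = 0")
  case True
  then show ?thesis using psd_qf[OF assms, of x] psd_qf[OF assms, of z] by simp
next
  case False
  define s where "s = bil N N A x z"
  define t where "t = - cnj s / complex_of_real (cmod s)"
  have sn: "cmod s \<noteq> 0" using False s_def by simp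
  have sc: "s * cnj s = (complex_of_real (cmod s))^2" using complex_norm_square[of s] by simp
  have sc2: "cnj s * s = (complex_of_real (cmod s))^2" using sc by (simp only: mult.commute)
  have "t * s = - (cnj s * s) / complex_of_real (cmod s)"
    unfolding t_def by simp
  also have "\<dots> = - complex_of_real (cmod s)" 
    unfolding sc2 using sn by (simp add: power2_eq_square)
  finally have ts: "t * s = - complex_of_real (cmod s)" .
  have tt: "cnj t * t = 1"
  proof -
    have "cnj t * t = (s * cnj s) / (complex_of_real (cmod s) * complex_of_real (cmod s))"
      unfolding t_def by simp
    then show ?thesis unfolding sc using sn by (simp add: power2_eq_square)
  qed
  have "Re (bil N N A (\<lambda>i. x i + t * z i) (\<lambda>i. x i + t * z i)) \<ge> 0"
    using psd_qf[OF assms] by blast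
  also have "bil N N A (\<lambda>i. x i + t * z i) (\<lambda>i. x i + t * z i) =
     bil N N A x x + t * s + cnj (t * s) + bil N N A z z"
    unfolding bil_expand bil_herm[OF assms, of z x] s_def[symmetric] using tt by simp
  finally have "0 \<le> Re (bil N N A x x) - 2 * cmod s + Re (bil N N A z z)"
    using ts by simp
  then show ?thesis unfolding s_def by simp
qed

lemma payoff_carrier: "payoff_obs N Omega P u \<in> carrier_mat N N"
  unfolding payoff_obs_def by simp

lemma payoff_index: "i < N \<Longrightarrow> j < N \<Longrightarrow>
  payoff_obs N Omega P u $$ (i, j) = (\<Sum>w\<in>Omega. complex_of_real (u w) * P w $$ (i, j))"
  unfolding payoff_obs_def by simp

lemma bil_payoff:
  "bil N N (payoff_obs N Omega P u) x z = (\<Sum>w\<in>Omega. complex_of_real (u w) * bil N N (P w) x z)"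
proof -
  have "bil N N (payoff_obs N Omega P u) x z =
     (\<Sum>i<N. \<Sum>j<N. \<Sum>w\<in>Omega. complex_of_real (u w) * (cnj (x i) * P w $$ (i, j) * z j))"
    unfolding bil_def
    by (intro sum.cong refl) (simp add: payoff_index sum_distrib_left sum_distrib_right mult_ac)
  also have "\<dots> = (\<Sum>i<N. \<Sum>w\<in>Omega. \<Sum>j<N. complex_of_real (u w) * (cnj (x i) * P w $$ (i, j) * z j))"
    by (rule sum.cong[OF refl], rule sum.swap)
  also have "\<dots> = (\<Sum>w\<in>Omega. \<Sum>i<N. \<Sum>j<N. complex_of_real (u w) * (cnj (x i) * P w $$ (i, j) * z j))"
    by (rule sum.swap)
  also have "\<dots> = (\<Sum>w\<in>Omega. complex_of_real (u w) * bil N N (P w) x z)"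
    unfolding bil_def by (simp add: sum_distrib_left)
  finally show ?thesis .
qed

lemma qf_sum:
  assumes "povm N Omega P"
  shows "(\<Sum>w\<in>Omega. bil N N (P w) x x) = complex_of_real (nsq N x)"
proof -
  have "(\<Sum>w\<in>Omega. bil N N (P w) x x) = (\<Sum>w\<in>Omega. \<Sum>i<N. \<Sum>j<N. cnj (x i) * P w $$ (i, j) * x j)"
    unfolding bil_def ..
  also have "\<dots> = (\<Sum>i<N. \<Sum>w\<in>Omega. \<Sum>j<N. cnj (x i) * P w $$ (i, j) * x j)"
    by (rule sum.swap)
  also have "\<dots> = (\<Sum>i<N. \<Sum>j<N. \<Sum>w\<in>Omega. cnj (x i) * P w $$ (i, j) * x j)"
    by (rule sum.cong[OF refl], rule sum.swap)
  also have "\<dots> = (\<Sum>i<N. \<Sum>j<N. cnj (x i) * (1\<^sub>m N) $$ (i, j) * x j)"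
  proof (intro sum.cong refl)
    fix i j assume ij: "i \<in> {..<N}" "j \<in> {..<N}"
    have "(\<Sum>w\<in>Omega. cnj (x i) * P w $$ (i, j) * x j) = cnj (x i) * (\<Sum>w\<in>Omega. P w $$ (i, j)) * x j"
      by (simp add: sum_distrib_left sum_distrib_right)
    also have "\<dots> = cnj (x i) * (1\<^sub>m N) $$ (i, j) * x j"
      using assms ij unfolding povm_def by auto
    finally show "(\<Sum>w\<in>Omega. cnj (x i) * P w $$ (i, j) * x j) = cnj (x i) * (1\<^sub>m N) $$ (i, j) * x j" .
  qed
  also have "\<dots> = (\<Sum>i<N. cnj (x i) * x i)"
  proof (intro sum.cong refl)
    fix i assume i: "i \<in> {..<N}"
    have "(\<Sum>j<N. cnj (x i) * (1\<^sub>m N) $$ (i, j) * x j) = (\<Sum>j<N. if j = i then cnj (x i) * x j else 0)"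
      using i by (intro sum.cong refl) auto
    also have "\<dots> = cnj (x i) * x i" using i by simp
    finally show "(\<Sum>j<N. cnj (x i) * (1\<^sub>m N) $$ (i, j) * x j) = cnj (x i) * x i" .
  qed
  also have "\<dots> = complex_of_real (nsq N x)"
    unfolding nsq_def of_real_sum
    by (intro sum.cong refl) (metis complex_norm_square mult.commute of_real_power)
  finally show ?thesis .
qed

lemma U_bound1:
  assumes P: "povm N Omega P" and u: "\<forall>w\<in>Omega. \<bar>u w\<bar> \<le> 1"
  shows "cmod (bil N N (payoff_obs N Omega P u) x z) \<le> (nsq N x + nsq N z) / 2"
proof -
  have fin: "finite Omega" and psd: "\<And>w. w \<in> Omega \<Longrightarrow> psd N (P w)" using P unfolding povm_def by auto
  have "cmod (bil N N (payoff_obs N Omega P u) x z) \<le> (\<Sum>w\<in>Omega. cmod (complex_of_real (u w) * bil N N (P w) x z))"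
    unfolding bil_payoff by (rule norm_sum)
  also have "\<dots> \<le> (\<Sum>w\<in>Omega. (Re (bil N N (P w) x x) + Re (bil N N (P w) z z)) / 2)"
  proof (rule sum_mono)
    fix w assume w: "w \<in> Omega"
    have "cmod (complex_of_real (u w) * bil N N (P w) x z) = \<bar>u w\<bar> * cmod (bil N N (P w) x z)"
      by (simp add: norm_mult)
    also have "\<dots> \<le> 1 * cmod (bil N N (P w) x z)"
      using u w by (intro mult_right_mono) auto
    also have "\<dots> \<le> (Re (bil N N (P w) x x) + Re (bil N N (P w) z z)) / 2"
      using psd_bil_bound[OF psd[OF w]] by simp
    finally show "cmod (complex_of_real (u w) * bil N N (P w) x z) \<le> (Re (bil N N (P w) x x) + Re (bil N N (P w) z z)) / 2" .
  qed
  also have "\<dots> = (Re (\<Sum>w\<in>Omega. bil N N (P w) x x) + Re (\<Sum>w\<in>Omega. bil N N (P w) z z)) / 2"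
    by (simp add: Re_sum sum.distrib sum_divide_distrib[symmetric])
  also have "\<dots> = (nsq N x + nsq N z) / 2"
    unfolding qf_sum[OF P] by simp
  finally show ?thesis .
qed

lemma nsq_zero:
  assumes "nsq N x = 0" "i < N" shows "x i = 0"
proof -
  have "\<forall>i\<in>{..<N}. (cmod (x i))^2 = 0"
    using assms(1) unfolding nsq_def by (subst sum_nonneg_eq_0_iff[symmetric]) auto
  then show ?thesis using assms(2) by auto
qed

lemma bil_zero_left: "nsq r x = 0 \<Longrightarrow> bil r c A x z = 0"
  unfolding bil_def using nsq_zero[of r x] by simp

lemma bil_zero_right: "nsq c z = 0 \<Longrightarrow> bil r c A x z = 0"
  unfolding bil_def using nsq_zero[of c z] by simp

lemma bil_scale:
  assumes "t \<noteq> 0"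
  shows "bil r c A (\<lambda>i. complex_of_real t * x i) (\<lambda>j. z j / complex_of_real t) = bil r c A x z"
  unfolding bil_def using assms by (intro sum.cong refl) (simp add: field_simps)

lemma nsq_scale: "nsq N (\<lambda>i. complex_of_real t * x i) = t^2 * nsq N x"
  unfolding nsq_def by (simp add: sum_distrib_left norm_mult power_mult_distrib)

lemma nsq_scale_div: "nsq N (\<lambda>i. x i / complex_of_real t) = nsq N x / t^2"
  unfolding nsq_def by (simp add: sum_divide_distrib norm_divide power_divide)

lemma U_bound:
  assumes P: "povm N Omega P" and u: "\<forall>w\<in>Omega. \<bar>u w\<bar> \<le> 1"
  shows "cmod (bil N N (payoff_obs N Omega P u) x z) \<le> sqrt (nsq N x) * sqrt (nsq N z)"
proof (cases "nsq N x = 0 \<or> nsq N z = 0")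
  case True
  then show ?thesis using bil_zero_left bil_zero_right by auto
next
  case False
  define X where "X = sqrt (nsq N x)"
  define Z where "Z = sqrt (nsq N z)"
  have X: "X > 0" and Z: "Z > 0" using False nsq_nonneg[of N x] nsq_nonneg[of N z]
    unfolding X_def Z_def by auto
  have X2: "nsq N x = X^2" and Z2: "nsq N z = Z^2" unfolding X_def Z_def using nsq_nonneg by auto
  define t where "t = sqrt (Z / X)"
  have t: "t > 0" using X Z unfolding t_def by auto
  have t2: "t^2 = Z / X" unfolding t_def using X Z by simp
  have "cmod (bil N N (payoff_obs N Omega P u) x z) =
        cmod (bil N N (payoff_obs N Omega P u) (\<lambda>i. complex_of_real t * x i) (\<lambda>j. z j / complex_of_real t))"
    using bil_scale[of t] t by simp
  also have "\<dots> \<le> (t^2 * nsq N x + nsq N z / t^2) / 2"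
    using U_bound1[OF P u, of "\<lambda>i. complex_of_real t * x i" "\<lambda>j. z j / complex_of_real t"]
    unfolding nsq_scale nsq_scale_div .
  also have "\<dots> = X * Z"
    unfolding t2 X2 Z2 using X Z by (simp add: field_simps power2_eq_square)
  finally show ?thesis unfolding X_def Z_def .
qed

definition tr :: "nat \<Rightarrow> complex mat \<Rightarrow> complex" where
  "tr D A = (\<Sum>i<D. A $$ (i, i))"

definition herm :: "nat \<Rightarrow> complex mat \<Rightarrow> bool" where
  "herm D M \<longleftrightarrow> M \<in> carrier_mat D D \<and> (\<forall>i<D. \<forall>j<D. M $$ (j, i) = cnj (M $$ (i, j)))"

lemma herm_carrier: "herm D M \<Longrightarrow> M \<in> carrier_mat D D"
  unfolding herm_def by blast

lemma herm_entry: "herm D M \<Longrightarrow> i < D \<Longrightarrow> j < D \<Longrightarrow> M $$ (j, i) = cnj (M $$ (i, j))"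
  unfolding herm_def by blast

lemma tr_mult_index:
  assumes "A \<in> carrier_mat D D" "B \<in> carrier_mat D D"
  shows "tr D (A * B) = (\<Sum>i<D. \<Sum>k<D. A $$ (i, k) * B $$ (k, i))"
  unfolding tr_def using assms
  by (intro sum.cong refl) (simp add: scalar_prod_def atLeast0LessThan)

lemma tr_comm:
  assumes "A \<in> carrier_mat D D" "B \<in> carrier_mat D D"
  shows "tr D (A * B) = tr D (B * A)"
  unfolding tr_mult_index[OF assms] tr_mult_index[OF assms(2,1)]
  by (subst sum.swap) (simp add: mult.commute)

lemma tr_similar:
  assumes "similar_mat_wit M B P Q" "M \<in> carrier_mat D D" "X \<in> carrier_mat D D"
  shows "tr D (P * X * Q) = tr D X"
proof -
  from assms(1,2) have P: "P \<in> carrier_mat D D" and Q: "Q \<in> carrier_mat D D" and QP: "Q * P = 1\<^sub>m D"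
    unfolding similar_mat_wit_def Let_def by auto
  have "tr D (P * X * Q) = tr D (P * (X * Q))" using P Q assms(3) by (simp add: assoc_mult_mat)
  also have "\<dots> = tr D ((X * Q) * P)" using P Q assms(3) by (intro tr_comm) auto
  also have "\<dots> = tr D (X * (Q * P))" using P Q assms(3) by (simp add: assoc_mult_mat)
  also have "\<dots> = tr D X" using QP assms(3) by simp
  finally show ?thesis .
qed

lemma tr_upper_sq:
  assumes "B \<in> carrier_mat D D" "upper_triangular B" "\<forall>i<D. B $$ (i, i) = 0"
  shows "tr D (B * B) = 0"
  unfolding tr_mult_index[OF assms(1) assms(1)]
proof (rule sum.neutral, rule ballI)
  fix i assume i: "i \<in> {..<D}"
  show "(\<Sum>k<D. B $$ (i, k) * B $$ (k, i)) = 0"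
  proof (rule sum.neutral, rule ballI)
    fix k assume k: "k \<in> {..<D}"
    consider "k < i" | "k = i" | "i < k" by linarith
    then show "B $$ (i, k) * B $$ (k, i) = 0"
      using assms i k unfolding upper_triangular_def by cases auto
  qed
qed

lemma tr_herm_sq:
  assumes "herm D M"
  shows "tr D (M * M) = complex_of_real (\<Sum>i<D. \<Sum>k<D. (cmod (M $$ (i, k)))^2)"
proof -
  have M: "M \<in> carrier_mat D D" using herm_carrier[OF assms] .
  have "tr D (M * M) = (\<Sum>i<D. \<Sum>k<D. M $$ (i, k) * M $$ (k, i))" by (rule tr_mult_index[OF M M])
  also have "\<dots> = (\<Sum>i<D. \<Sum>k<D. complex_of_real ((cmod (M $$ (i, k)))^2))"
  proof (intro sum.cong refl)
    fix i k assume "i \<in> {..<D}" "k \<in> {..<D}"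
    then have "M $$ (k, i) = cnj (M $$ (i, k))" using herm_entry[OF assms, of i k] by simp
    then show "M $$ (i, k) * M $$ (k, i) = complex_of_real ((cmod (M $$ (i, k)))^2)"
      using complex_norm_square[of "M $$ (i, k)"] by simp
  qed
  also have "\<dots> = complex_of_real (\<Sum>i<D. \<Sum>k<D. (cmod (M $$ (i, k)))^2)" by simp
  finally show ?thesis .
qed

lemma herm_nonzero_eigen:
  assumes H: "herm D M" and nz: "i0 < D" "k0 < D" "M $$ (i0, k0) \<noteq> 0"
  shows "\<exists>v e. v \<in> carrier_vec D \<and> v \<noteq> 0\<^sub>v D \<and> M *\<^sub>v v = e \<cdot>\<^sub>v v \<and> e \<noteq> 0"
proof -
  have M: "M \<in> carrier_mat D D" using herm_carrier[OF H] .
  obtain es where cp: "char_poly M = (\<Prod>a\<leftarrow>es. [:- a, 1:])" and len: "length es = D"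
    using char_poly_factorized[OF M] by blast
  obtain B P Q where sd: "schur_decomposition M es = (B, P, Q)" by (cases "schur_decomposition M es") auto
  from schur_decomposition[OF M cp sd] have sim: "similar_mat_wit M B P Q"
    and ut: "upper_triangular B" and dg: "diag_mat B = es" by auto
  from sim M have B: "B \<in> carrier_mat D D" and MPBQ: "M = P * B * Q"
    and P: "P \<in> carrier_mat D D" and Q: "Q \<in> carrier_mat D D" and QP: "Q * P = 1\<^sub>m D"
    unfolding similar_mat_wit_def Let_def by auto
  have "\<exists>e\<in>set es. e \<noteq> 0"
  proof (rule ccontr)
    assume "\<not> ?thesis"
    then have z: "\<forall>e\<in>set es. e = 0" by auto
    have "\<forall>i<D. B $$ (i, i) = 0"
    proof (intro allI impI)
      fix i assume i: "i < D"
      have "B $$ (i, i) = diag_mat B ! i" using B i unfolding diag_mat_def by auto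
      also have "\<dots> \<in> set es" using dg i len by auto
      finally show "B $$ (i, i) = 0" using z by auto
    qed
    then have t0: "tr D (B * B) = 0" using tr_upper_sq[OF B ut] by auto
    have "M * M = P * (B * B) * Q"
    proof -
      have "M * M = (P * B * Q) * (P * B * Q)" using MPBQ by simp
      also have "\<dots> = P * B * (Q * P) * B * Q"
        using P B Q by (simp add: assoc_mult_mat[of _ D D _ D _ D])
      also have "\<dots> = P * (B * B) * Q"
        using P B Q QP by (simp add: assoc_mult_mat[of _ D D _ D _ D])
      finally show ?thesis .
    qed
    then have "tr D (M * M) = 0" using tr_similar[OF sim M, of "B * B"] B t0 by simp
    then have "complex_of_real (\<Sum>i<D. \<Sum>k<D. (cmod (M $$ (i, k)))^2) = 0"
      using tr_herm_sq[OF H] by (simp only:)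
    then have s0: "(\<Sum>i<D. \<Sum>k<D. (cmod (M $$ (i, k)))^2) = 0" by (simp only: of_real_eq_0_iff)
    have "(\<Sum>k<D. (cmod (M $$ (i0, k)))^2) = 0"
      using s0 nz(1) by (subst (asm) sum_nonneg_eq_0_iff) (auto intro: sum_nonneg)
    then have "(cmod (M $$ (i0, k0)))^2 = 0"
      using nz(2) by (subst (asm) sum_nonneg_eq_0_iff) auto
    then show False using nz(3) by simp
  qed
  then obtain e where e: "e \<in> set es" "e \<noteq> 0" by auto
  have "poly (char_poly M) e = 0"
    unfolding cp poly_prod_list using e(1) by (auto simp: prod_list_zero_iff)
  then have "eigenvalue M e" using eigenvalue_root_char_poly[OF M] by simp
  then obtain v where "eigenvector M v e" unfolding eigenvalue_def by blast
  then show ?thesis using M e(2) unfolding eigenvector_def by auto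
qed

definition ip :: "nat \<Rightarrow> (nat \<Rightarrow> complex) \<Rightarrow> (nat \<Rightarrow> complex) \<Rightarrow> complex" where
  "ip N x y = (\<Sum>i<N. cnj (x i) * y i)"

definition mvN :: "nat \<Rightarrow> complex mat \<Rightarrow> (nat \<Rightarrow> complex) \<Rightarrow> nat \<Rightarrow> complex" where
  "mvN N M x = (\<lambda>i. \<Sum>j<N. M $$ (i, j) * x j)"

definition orthon :: "nat \<Rightarrow> nat \<Rightarrow> (nat \<Rightarrow> nat \<Rightarrow> complex) \<Rightarrow> bool" where
  "orthon N k u \<longleftrightarrow> (\<forall>r<k. \<forall>s<k. ip N (u r) (u s) = (if r = s then 1 else 0))"

lemma ip_cnj: "ip N y x = cnj (ip N x y)"
  unfolding ip_def by (simp add: cnj_sum mult.commute)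

lemma ip_self: "ip N x x = complex_of_real (nsq N x)"
  unfolding ip_def nsq_def of_real_sum
  by (intro sum.cong refl) (metis complex_norm_square mult.commute of_real_power)

lemma herm_ip:
  assumes H: "herm N M"
  shows "ip N (mvN N M x) y = ip N x (mvN N M y)"
proof -
  have "ip N (mvN N M x) y = (\<Sum>i<N. \<Sum>j<N. cnj (M $$ (i, j)) * cnj (x j) * y i)"
    unfolding ip_def mvN_def by (simp add: cnj_sum sum_distrib_right)
  also have "\<dots> = (\<Sum>i<N. \<Sum>j<N. M $$ (j, i) * cnj (x j) * y i)"
  proof (intro sum.cong refl)
    fix i j assume "i \<in> {..<N}" "j \<in> {..<N}"
    then show "cnj (M $$ (i, j)) * cnj (x j) * y i = M $$ (j, i) * cnj (x j) * y i"
      using herm_entry[OF H, of i j] by simp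
  qed
  also have "\<dots> = (\<Sum>j<N. \<Sum>i<N. M $$ (j, i) * cnj (x j) * y i)" by (rule sum.swap)
  also have "\<dots> = ip N x (mvN N M y)"
    unfolding ip_def mvN_def by (simp add: sum_distrib_left mult_ac)
  finally show ?thesis .
qed

lemma eigvec_fun:
  assumes "v \<in> carrier_vec N" "M \<in> carrier_mat N N" "M *\<^sub>v v = e \<cdot>\<^sub>v v" "i < N"
  shows "mvN N M (\<lambda>j. v $ j) i = e * v $ i"
proof -
  have "(M *\<^sub>v v) $ i = (e \<cdot>\<^sub>v v) $ i" using assms(3) by simp
  also have "\<dots> = e * v $ i" using assms(1,4) by simp
  also have "(M *\<^sub>v v) $ i = (\<Sum>j<N. M $$ (i, j) * v $ j)"
    using assms(1,2,4) by (simp add: scalar_prod_def atLeast0LessThan)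
  finally show ?thesis unfolding mvN_def .
qed

lemma normalize_vec:
  assumes "nsq N x > 0"
  defines "p \<equiv> (\<lambda>i. x i / complex_of_real (sqrt (nsq N x)))"
  shows "ip N p p = 1" "ip N y p = ip N y x / complex_of_real (sqrt (nsq N x))"
    "mvN N M p i = mvN N M x i / complex_of_real (sqrt (nsq N x))"
proof -
  have "ip N p p = ip N x x / (complex_of_real (sqrt (nsq N x)))^2"
    unfolding p_def ip_def by (simp add: sum_divide_distrib power2_eq_square)
  also have "\<dots> = 1" unfolding ip_self using assms(1)
    by (simp add: of_real_power[symmetric] del: of_real_power)
  finally show "ip N p p = 1" .
  show "ip N y p = ip N y x / complex_of_real (sqrt (nsq N x))"
    unfolding p_def ip_def by (simp add: sum_divide_distrib)
  show "mvN N M p i = mvN N M x i / complex_of_real (sqrt (nsq N x))"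
    unfolding p_def mvN_def by (simp add: sum_divide_distrib)
qed

lemma orth_complement:
  assumes O: "orthon N k u" and k: "k < N"
  shows "\<exists>p. ip N p p = 1 \<and> (\<forall>r<k. ip N (u r) p = 0)"
proof -
  define q where "q l = (\<lambda>a. (if a = l then 1 else 0) - (\<Sum>r<k. cnj (u r l) * u r a))" for l
  have qorth: "ip N (u t) (q l) = 0" if t: "t < k" and l: "l < N" for t l
  proof -
    have "ip N (u t) (q l) = (\<Sum>a<N. cnj (u t a) * (if a = l then 1 else 0)) - (\<Sum>r<k. cnj (u r l) * ip N (u t) (u r))"
      unfolding q_def ip_def by (simp add: right_diff_distrib sum_subtractf sum_distrib_left mult_ac sum.swap[of _ "{..<k}"])
    also have "(\<Sum>a<N. cnj (u t a) * (if a = l then 1 else 0)) = cnj (u t l)"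
      using l by (simp add: if_distrib cong: if_cong)
    also have "(\<Sum>r<k. cnj (u r l) * ip N (u t) (u r)) = (\<Sum>r<k. if r = t then cnj (u r l) else 0)"
      using O t unfolding orthon_def by (intro sum.cong refl) auto
    also have "\<dots> = cnj (u t l)" using t by simp
    finally show ?thesis by simp
  qed
  have "\<exists>l<N. \<exists>a<N. q l a \<noteq> 0"
  proof (rule ccontr)
    assume "\<not> ?thesis"
    then have z: "\<And>l a. l < N \<Longrightarrow> a < N \<Longrightarrow> q l a = 0" by auto
    have one: "(\<Sum>r<k. cnj (u r l) * u r l) = 1" if l: "l < N" for l
      using z[OF l l] unfolding q_def by simp
    have "of_nat N = (\<Sum>l<N. (1::complex))" by simp
    also have "\<dots> = (\<Sum>l<N. \<Sum>r<k. cnj (u r l) * u r l)" using one by simp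
    also have "\<dots> = (\<Sum>r<k. ip N (u r) (u r))" unfolding ip_def by (rule sum.swap)
    also have "\<dots> = (\<Sum>r<k. (1::complex))" using O unfolding orthon_def by simp
    also have "\<dots> = of_nat k" by simp
    finally have "(of_nat N :: complex) = of_nat k" .
    then show False using k by simp
  qed
  then obtain l a where l: "l < N" and a: "a < N" and qa: "q l a \<noteq> 0" by auto
  have pos: "nsq N (q l) > 0"
  proof -
    have "(cmod (q l a))^2 > 0" using qa by simp
    also have "(cmod (q l a))^2 \<le> nsq N (q l)" unfolding nsq_def
      using a by (intro member_le_sum) auto
    finally show ?thesis .
  qed
  define p where "p = (\<lambda>i. q l i / complex_of_real (sqrt (nsq N (q l))))"
  have "ip N p p = 1" using normalize_vec(1)[OF pos] unfolding p_def .
  moreover have "\<forall>r<k. ip N (u r) p = 0"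
    using normalize_vec(2)[OF pos] qorth l unfolding p_def by simp
  ultimately show ?thesis by blast
qed

lemma spectral_step:
  assumes H: "herm N M"
  shows "k \<le> N \<Longrightarrow> \<exists>u lam. orthon N k u \<and> (\<forall>r<k. \<forall>i<N. mvN N M (u r) i = complex_of_real (lam r) * u r i)"
proof (induction k)
  case 0
  then show ?case unfolding orthon_def by auto
next
  case (Suc k)
  then have k: "k < N" by simp
  from Suc obtain u lam where O: "orthon N k u"
    and eig: "\<And>r i. r < k \<Longrightarrow> i < N \<Longrightarrow> mvN N M (u r) i = complex_of_real (lam r) * u r i" by auto
  have Mc: "M \<in> carrier_mat N N" using herm_carrier[OF H] .
  define M1 where "M1 = mat N N (\<lambda>(a, b). M $$ (a, b) - (\<Sum>r<k. complex_of_real (lam r) * u r a * cnj (u r b)))"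
  have M1c: "M1 \<in> carrier_mat N N" unfolding M1_def by simp
  have M1e: "M1 $$ (a, b) = M $$ (a, b) - (\<Sum>r<k. complex_of_real (lam r) * u r a * cnj (u r b))"
    if "a < N" "b < N" for a b using that unfolding M1_def by simp
  have H1: "herm N M1"
    unfolding herm_def
  proof (intro conjI allI impI M1c)
    fix a b assume a: "a < N" and b: "b < N"
    show "M1 $$ (b, a) = cnj (M1 $$ (a, b))"
      unfolding M1e[OF a b] M1e[OF b a] using herm_entry[OF H a b]
      by (simp add: cnj_sum mult_ac)
  qed
  have P1: "mvN N M1 x a = mvN N M x a - (\<Sum>r<k. complex_of_real (lam r) * u r a * ip N (u r) x)"
    if a: "a < N" for x a
  proof -
    have "mvN N M1 x a = (\<Sum>b<N. M $$ (a, b) * x b - (\<Sum>r<k. complex_of_real (lam r) * u r a * (cnj (u r b) * x b)))"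
      unfolding mvN_def using a by (intro sum.cong refl) (simp add: M1e left_diff_distrib right_diff_distrib sum_distrib_left sum_distrib_right mult_ac)
    also have "\<dots> = mvN N M x a - (\<Sum>b<N. \<Sum>r<k. complex_of_real (lam r) * u r a * (cnj (u r b) * x b))"
      unfolding mvN_def by (simp add: sum_subtractf)
    also have "(\<Sum>b<N. \<Sum>r<k. complex_of_real (lam r) * u r a * (cnj (u r b) * x b)) =
       (\<Sum>r<k. complex_of_real (lam r) * u r a * ip N (u r) x)"
      unfolding ip_def by (subst sum.swap) (simp add: sum_distrib_left)
    finally show ?thesis .
  qed
  have M1u: "mvN N M1 (u s) a = 0" if s: "s < k" and a: "a < N" for s a
  proof -
    have "(\<Sum>r<k. complex_of_real (lam r) * u r a * ip N (u r) (u s)) =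
          (\<Sum>r<k. if r = s then complex_of_real (lam r) * u r a else 0)"
      using O s unfolding orthon_def by (intro sum.cong refl) auto
    also have "\<dots> = complex_of_real (lam s) * u s a" using s by simp
    finally show ?thesis unfolding P1[OF a] eig[OF s a] by simp
  qed
  have ipM1: "ip N (mvN N M1 x) y = ip N x (mvN N M1 y)" for x y by (rule herm_ip[OF H1])
  have ip_cong: "ip N x y = ip N x' y'" if "\<And>i. i < N \<Longrightarrow> x i = x' i" "\<And>i. i < N \<Longrightarrow> y i = y' i" for x y x' y'
    unfolding ip_def using that by simp
  obtain p e where pn: "ip N p p = 1" and po: "\<forall>r<k. ip N (u r) p = 0"
    and pe: "\<And>i. i < N \<Longrightarrow> mvN N M p i = complex_of_real e * p i"
  proof (cases "\<forall>a<N. \<forall>b<N. M1 $$ (a, b) = 0")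
    case True
    obtain p where pn: "ip N p p = 1" and po: "\<forall>r<k. ip N (u r) p = 0"
      using orth_complement[OF O k] by blast
    have "mvN N M p i = complex_of_real 0 * p i" if i: "i < N" for i
    proof -
      have "mvN N M1 p i = 0" unfolding mvN_def using True i by simp
      then show ?thesis using P1[OF i, of p] po by simp
    qed
    then show ?thesis using that pn po by blast
  next
    case False
    then obtain a0 b0 where ab: "a0 < N" "b0 < N" "M1 $$ (a0, b0) \<noteq> 0" by auto
    obtain v e where v: "v \<in> carrier_vec N" "v \<noteq> 0\<^sub>v N" and ve: "M1 *\<^sub>v v = e \<cdot>\<^sub>v v" and e0: "e \<noteq> 0"
      using herm_nonzero_eigen[OF H1 ab] by blast
    define x where "x = (\<lambda>j. v $ j)"
    have xe: "mvN N M1 x i = e * x i" if "i < N" for i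
      using eigvec_fun[OF v(1) M1c ve that] unfolding x_def .
    have "\<exists>i<N. x i \<noteq> 0"
    proof (rule ccontr)
      assume "\<not> ?thesis"
      then have "v = 0\<^sub>v N" using v(1) unfolding x_def by (intro eq_vecI) auto
      then show False using v(2) by simp
    qed
    then obtain i0 where i0: "i0 < N" "x i0 \<noteq> 0" by auto
    have pos: "nsq N x > 0"
    proof -
      have "(cmod (x i0))^2 > 0" using i0 by simp
      also have "(cmod (x i0))^2 \<le> nsq N x" unfolding nsq_def
        using i0 by (intro member_le_sum) auto
      finally show ?thesis .
    qed
    have ipMx: "ip N y (mvN N M1 x) = e * ip N y x" for y
    proof -
      have "ip N y (mvN N M1 x) = ip N y (\<lambda>i. e * x i)" by (rule ip_cong) (auto simp: xe)
      also have "\<dots> = e * ip N y x" unfolding ip_def by (simp add: sum_distrib_left mult_ac)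
      finally show ?thesis .
    qed
    have xo: "ip N (u r) x = 0" if r: "r < k" for r
    proof -
      have "e * ip N (u r) x = ip N (mvN N M1 (u r)) x" using ipMx ipM1 by simp
      also have "\<dots> = ip N (\<lambda>i. 0) x" by (rule ip_cong) (auto simp: M1u[OF r])
      also have "\<dots> = 0" unfolding ip_def by simp
      finally show ?thesis using e0 by simp
    qed
    have ereal: "cnj e = e"
    proof -
      have "ip N (mvN N M1 x) x = cnj (ip N x (mvN N M1 x))" by (rule ip_cnj)
      then have "e * ip N x x = cnj (e * ip N x x)" using ipMx ipM1 by simp
      then have "e * complex_of_real (nsq N x) = cnj e * complex_of_real (nsq N x)"
        unfolding ip_self by simp
      then show ?thesis using pos by simp
    qed
    then have eR: "e = complex_of_real (Re e)" by (metis Reals_cnj_iff complex_is_Real_iff of_real_Re)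
    define p where "p = (\<lambda>i. x i / complex_of_real (sqrt (nsq N x)))"
    have pn: "ip N p p = 1" using normalize_vec(1)[OF pos] unfolding p_def .
    have po: "\<forall>r<k. ip N (u r) p = 0" using normalize_vec(2)[OF pos] xo unfolding p_def by simp
    have "mvN N M p i = complex_of_real (Re e) * p i" if i: "i < N" for i
    proof -
      have "mvN N M p i = mvN N M1 p i" using P1[OF i, of p] po by simp
      also have "\<dots> = mvN N M1 x i / complex_of_real (sqrt (nsq N x))"
        using normalize_vec(3)[OF pos] unfolding p_def .
      also have "\<dots> = e * p i" unfolding xe[OF i] p_def by simp
      finally show ?thesis using eR by simp
    qed
    then show ?thesis using that pn po by blast
  qed
  define u' where "u' = u(k := p)"
  define lam' where "lam' = lam(k := e)"
  have "orthon N (Suc k) u'"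
    unfolding orthon_def
  proof (intro allI impI)
    fix r s assume r: "r < Suc k" and s: "s < Suc k"
    show "ip N (u' r) (u' s) = (if r = s then 1 else 0)"
    proof (cases "r = k")
      case True
      show ?thesis
      proof (cases "s = k")
        case True
        then show ?thesis using \<open>r = k\<close> pn unfolding u'_def by simp
      next
        case False
        then have "s < k" using s by simp
        then have "ip N (u s) p = 0" using po by simp
        then have "ip N p (u s) = 0" using ip_cnj[of N p "u s"] by simp
        then show ?thesis using \<open>r = k\<close> False unfolding u'_def by simp
      qed
    next
      case False
      then have rk: "r < k" using r by simp
      show ?thesis
      proof (cases "s = k")
        case True
        then show ?thesis using rk po unfolding u'_def by simp
      next
        case False
        then have "s < k" using s by simp
        then show ?thesis using rk O \<open>r \<noteq> k\<close> False unfolding u'_def orthon_def by simp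
      qed
    qed
  qed
  moreover have "\<forall>r<Suc k. \<forall>i<N. mvN N M (u' r) i = complex_of_real (lam' r) * u' r i"
  proof (intro allI impI)
    fix r i assume r: "r < Suc k" and i: "i < N"
    show "mvN N M (u' r) i = complex_of_real (lam' r) * u' r i"
    proof (cases "r = k")
      case True
      then show ?thesis using pe[OF i] unfolding u'_def lam'_def by simp
    next
      case False
      then show ?thesis using eig[of r i] r i unfolding u'_def lam'_def by simp
    qed
  qed
  ultimately show ?case by blast
qed

lemma proots_linear_prod: "proots (\<Prod>a\<leftarrow>xs. [:- a, 1:]) = mset (xs :: complex list)"
proof (induction xs)
  case Nil
  then show ?case by simp
next
  case (Cons a xs)
  have nz: "(\<Prod>a\<leftarrow>xs. [:- a, 1:]) \<noteq> (0 :: complex poly)"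
    by (auto simp: prod_list_zero_iff)
  have "proots (\<Prod>a\<leftarrow>a # xs. [:- a, 1:]) = proots ([:- a, 1:] * (\<Prod>a\<leftarrow>xs. [:- a, 1:]))" by simp
  also have "\<dots> = proots [:- a, 1:] + proots (\<Prod>a\<leftarrow>xs. [:- a, 1:])"
    using nz by (intro proots_mult) auto
  also have "\<dots> = {#a#} + mset xs" using Cons by simp
  finally show ?case by simp
qed

lemma sum_list_upt_sum: "sum_list (map g [0..<N]) = (\<Sum>r<N. g r)"
  by (induction N) auto

lemma spectral:
  assumes H: "herm N M"
  shows "\<exists>u lam. orthon N N u \<and>
     (\<forall>a<N. \<forall>b<N. M $$ (a, b) = (\<Sum>r<N. complex_of_real (lam r) * u r a * cnj (u r b))) \<and>
     trace_norm M = (\<Sum>r<N. \<bar>lam r\<bar>)"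
proof -
  have Mc: "M \<in> carrier_mat N N" using herm_carrier[OF H] .
  obtain u lam where O: "orthon N N u"
    and eig: "\<forall>r<N. \<forall>i<N. mvN N M (u r) i = complex_of_real (lam r) * u r i"
    using spectral_step[OF H, of N] by auto
  define W where "W = mat N N (\<lambda>(a, r). u r a)"
  define W' where "W' = mat N N (\<lambda>(r, a). cnj (u r a))"
  have Wc: "W \<in> carrier_mat N N" and W'c: "W' \<in> carrier_mat N N" unfolding W_def W'_def by auto
  have W'W: "W' * W = 1\<^sub>m N"
  proof (rule eq_matI)
    fix r s assume r: "r < dim_row (1\<^sub>m N)" and s: "s < dim_col (1\<^sub>m N)"
    have "(W' * W) $$ (r, s) = ip N (u r) (u s)"
      using r s unfolding W_def W'_def ip_def by (simp add: scalar_prod_def atLeast0LessThan)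
    also have "\<dots> = 1\<^sub>m N $$ (r, s)" using O r s unfolding orthon_def by simp
    finally show "(W' * W) $$ (r, s) = 1\<^sub>m N $$ (r, s)" .
  qed (use Wc W'c in auto)
  have WW': "W * W' = 1\<^sub>m N" by (rule mat_mult_left_right_inverse[OF W'c Wc W'W])
  have compl: "(\<Sum>r<N. u r a * cnj (u r b)) = (if a = b then 1 else 0)" if a: "a < N" and b: "b < N" for a b
  proof -
    have "(W * W') $$ (a, b) = (\<Sum>r<N. u r a * cnj (u r b))"
      using a b unfolding W_def W'_def by (simp add: scalar_prod_def atLeast0LessThan)
    then show ?thesis using WW' a b by simp
  qed
  have decomp: "M $$ (a, b) = (\<Sum>r<N. complex_of_real (lam r) * u r a * cnj (u r b))"
    if a: "a < N" and b: "b < N" for a b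
  proof -
    have "(\<Sum>r<N. complex_of_real (lam r) * u r a * cnj (u r b)) = (\<Sum>r<N. mvN N M (u r) a * cnj (u r b))"
      using eig a by simp
    also have "\<dots> = (\<Sum>r<N. \<Sum>c<N. M $$ (a, c) * (u r c * cnj (u r b)))"
      unfolding mvN_def by (simp add: sum_distrib_right sum_distrib_left mult_ac)
    also have "\<dots> = (\<Sum>c<N. M $$ (a, c) * (\<Sum>r<N. u r c * cnj (u r b)))"
      by (subst sum.swap) (simp add: sum_distrib_left)
    also have "\<dots> = (\<Sum>c<N. if c = b then M $$ (a, c) else 0)"
      using compl b by (intro sum.cong refl) auto
    also have "\<dots> = M $$ (a, b)" using b by simp
    finally show ?thesis by simp
  qed
  define L where "L = mat N N (\<lambda>(r, s). if r = s then complex_of_real (lam r) else 0)"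
  define L2 where "L2 = mat N N (\<lambda>(r, s). if r = s then (complex_of_real (lam r))^2 else 0)"
  have Lc: "L \<in> carrier_mat N N" and L2c: "L2 \<in> carrier_mat N N" unfolding L_def L2_def by auto
  have MW: "M = W * L * W'"
  proof (rule eq_matI)
    fix a b assume a: "a < dim_row (W * L * W')" and b: "b < dim_col (W * L * W')"
    then have a: "a < N" and b: "b < N" unfolding W_def W'_def L_def by auto
    have WL: "(W * L) $$ (a, s) = u s a * complex_of_real (lam s)" if s: "s < N" for s
    proof -
      have "(W * L) $$ (a, s) = (\<Sum>r<N. u r a * (if r = s then complex_of_real (lam r) else 0))"
        using a s unfolding W_def L_def by (simp add: scalar_prod_def atLeast0LessThan)
      also have "\<dots> = (\<Sum>r<N. if r = s then u r a * complex_of_real (lam r) else 0)"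
        by (intro sum.cong refl) auto
      also have "\<dots> = u s a * complex_of_real (lam s)" using s by simp
      finally show ?thesis .
    qed
    have "(W * L * W') $$ (a, b) = (\<Sum>s<N. (W * L) $$ (a, s) * cnj (u s b))"
      using a b Wc Lc unfolding W'_def by (simp add: scalar_prod_def atLeast0LessThan)
    also have "\<dots> = (\<Sum>s<N. complex_of_real (lam s) * u s a * cnj (u s b))"
      using WL by (simp add: mult_ac)
    also have "\<dots> = M $$ (a, b)" using decomp[OF a b] by simp
    finally show "M $$ (a, b) = (W * L * W') $$ (a, b)" by simp
  qed (use Mc Wc W'c Lc in auto)
  have LL: "L * L = L2"
  proof (rule eq_matI)
    fix r s assume r: "r < dim_row L2" and s: "s < dim_col L2"
    then have r: "r < N" and s: "s < N" unfolding L2_def by auto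
    have "(L * L) $$ (r, s) = (\<Sum>t<N. (if r = t then complex_of_real (lam r) else 0) * (if t = s then complex_of_real (lam t) else 0))"
      using r s unfolding L_def by (simp add: scalar_prod_def atLeast0LessThan)
    also have "\<dots> = (\<Sum>t<N. if t = r then (if r = s then (complex_of_real (lam r))^2 else 0) else 0)"
      by (intro sum.cong refl) (auto simp: power2_eq_square)
    also have "\<dots> = L2 $$ (r, s)" using r s unfolding L2_def by simp
    finally show "(L * L) $$ (r, s) = L2 $$ (r, s)" .
  qed (use Lc L2c in auto)
  have adj: "madj M = M"
  proof (rule eq_matI)
    fix a b assume a: "a < dim_row M" and b: "b < dim_col M"
    then show "madj M $$ (a, b) = M $$ (a, b)"
      using Mc herm_entry[OF H, of a b] unfolding madj_def by simp
  qed (use Mc in \<open>auto simp: madj_def\<close>)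
  have MM: "madj M * M = W * L2 * W'"
  proof -
    have "madj M * M = (W * L * W') * (W * L * W')" using adj MW by simp
    also have "\<dots> = W * L * (W' * W) * L * W'"
      using Wc W'c Lc by (simp add: assoc_mult_mat[of _ N N _ N _ N])
    also have "\<dots> = W * (L * L) * W'"
      using Wc W'c Lc W'W by (simp add: assoc_mult_mat[of _ N N _ N _ N])
    finally show ?thesis unfolding LL .
  qed
  have sim: "similar_mat (madj M * M) L2"
    unfolding similar_mat_def
  proof (intro exI)
    show "similar_mat_wit (madj M * M) L2 W W'"
      unfolding similar_mat_wit_def Let_def using MM Wc W'c L2c WW' W'W by auto
  qed
  have ut: "upper_triangular L2" unfolding upper_triangular_def L2_def by auto
  have dg: "diag_mat L2 = map (\<lambda>r. (complex_of_real (lam r))^2) [0..<N]"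
    unfolding diag_mat_def L2_def by simp
  have "char_poly (madj M * M) = (\<Prod>a\<leftarrow>diag_mat L2. [:- a, 1:])"
    unfolding char_poly_similar[OF sim] by (rule char_poly_upper_triangular[OF L2c ut])
  then have "proots (char_poly (madj M * M)) = mset (diag_mat L2)"
    using proots_linear_prod[of "diag_mat L2"] by (simp only:)
  moreover have "image_mset (\<lambda>x. sqrt (Re x)) (mset (diag_mat L2)) = mset (map (\<lambda>x. sqrt (Re x)) (diag_mat L2))"
    by simp
  ultimately have "trace_norm M = sum_list (map (\<lambda>x. sqrt (Re x)) (diag_mat L2))"
    unfolding trace_norm_def by (simp only: sum_mset_sum_list)
  also have "\<dots> = sum_list (map (\<lambda>r. sqrt (Re ((complex_of_real (lam r))^2))) [0..<N])"
    unfolding dg by (simp add: o_def)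
  also have "\<dots> = (\<Sum>r<N. \<bar>lam r\<bar>)"
    unfolding sum_list_upt_sum by (simp add: of_real_power[symmetric] del: of_real_power)
  finally have tn: "trace_norm M = (\<Sum>r<N. \<bar>lam r\<bar>)" .
  show ?thesis using O decomp tn by blast
qed

lemma sum_reindex2:
  fixes h :: "nat \<Rightarrow> 'c :: comm_monoid_add"
  shows "(\<Sum>t<a*b. h t) = (\<Sum>l<a. \<Sum>s<b. h (l*b+s))"
proof -
  have "(\<Sum>t<a*b. h t) = (\<Sum>(l, s)\<in>{..<a}\<times>{..<b}. h (l*b+s))"
  proof (rule sum.reindex_bij_witness[of _ "\<lambda>(l, s). l*b+s" "\<lambda>t. (t div b, t mod b)"])
    fix t assume t: "t \<in> {..<a*b}"
    then have b: "b > 0" by (cases b) auto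
    show "(case (t div b, t mod b) of (l, s) \<Rightarrow> l * b + s) = t" by simp
    show "(t div b, t mod b) \<in> {..<a} \<times> {..<b}" using t b
      by (auto simp: less_mult_imp_div_less)
    show "(case (t div b, t mod b) of (l, s) \<Rightarrow> h (l * b + s)) = h t" by simp
  next
    fix p assume p: "p \<in> {..<a} \<times> {..<b}"
    obtain l s where ls: "p = (l, s)" by (cases p)
    with p have l: "l < a" and s: "s < b" by auto
    have "l * b + s < l * b + b" using s by simp
    also have "\<dots> = (l + 1) * b" by simp
    also have "\<dots> \<le> a * b" using l by (intro mult_right_mono) auto
    finally have lt: "l * b + s < a * b" .
    show "(case p of (l, s) \<Rightarrow> l * b + s) \<in> {..<a * b}" using ls lt by simp
    show "((case p of (l, s) \<Rightarrow> l * b + s) div b, (case p of (l, s) \<Rightarrow> l * b + s) mod b) = p"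
      using ls s by simp
  qed
  also have "\<dots> = (\<Sum>l<a. \<Sum>s<b. h (l*b+s))"
    by (rule sum.cartesian_product[symmetric])
  finally show ?thesis .
qed

lemma tensor_nsq:
  "nsq (a*b) (\<lambda>t. f (t div b) * g (t mod b)) = nsq a f * nsq b g"
proof -
  have "nsq (a*b) (\<lambda>t. f (t div b) * g (t mod b)) = (\<Sum>l<a. \<Sum>s<b. (cmod (f ((l*b+s) div b) * g ((l*b+s) mod b)))^2)"
    unfolding nsq_def by (rule sum_reindex2)
  also have "\<dots> = (\<Sum>l<a. \<Sum>s<b. (cmod (f l))^2 * (cmod (g s))^2)"
    by (intro sum.cong refl) (simp add: norm_mult power_mult_distrib)
  also have "\<dots> = nsq a f * nsq b g"
    unfolding nsq_def by (simp add: sum_distrib_left sum_distrib_right sum.swap[of _ "{..<b}"])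
  finally show ?thesis .
qed

lemma madj_mult_index:
  assumes "U \<in> carrier_mat N N" "K \<in> carrier_mat N N" "p < N" "q < N"
  shows "(madj U * K) $$ (p, q) = (\<Sum>t<N. cnj (U $$ (t, p)) * K $$ (t, q))"
  using assms unfolding madj_def by (simp add: scalar_prod_def atLeast0LessThan)

lemma ptB_entry:
  assumes U: "U \<in> carrier_mat (a*b) (a*b)" and B: "B \<in> carrier_mat b b" and i: "i < a" and j: "j < a"
  shows "ptrace_B a b (madj U * kron (1\<^sub>m a) B) $$ (i, j) =
    (\<Sum>k<b. \<Sum>s<b. cnj (U $$ (j*b+s, i*b+k)) * B $$ (s, k))"
proof -
  have K: "kron (1\<^sub>m a) B \<in> carrier_mat (a*b) (a*b)" using B unfolding kron_def by simp
  have lt: "l * b + s < a * b" if "l < a" "s < b" for l s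
  proof -
    have "l * b + s < l * b + b" using that by simp
    also have "\<dots> = (l + 1) * b" by simp
    also have "\<dots> \<le> a * b" using that by (intro mult_right_mono) auto
    finally show ?thesis .
  qed
  have "ptrace_B a b (madj U * kron (1\<^sub>m a) B) $$ (i, j) = (\<Sum>k<b. (madj U * kron (1\<^sub>m a) B) $$ (i*b+k, j*b+k))"
    unfolding ptrace_B_def using i j by simp
  also have "\<dots> = (\<Sum>k<b. \<Sum>l<a. \<Sum>s<b. cnj (U $$ (l*b+s, i*b+k)) * kron (1\<^sub>m a) B $$ (l*b+s, j*b+k))"
  proof (rule sum.cong[OF refl])
    fix k assume k: "k \<in> {..<b}"
    then show "(madj U * kron (1\<^sub>m a) B) $$ (i*b+k, j*b+k) = (\<Sum>l<a. \<Sum>s<b. cnj (U $$ (l*b+s, i*b+k)) * kron (1\<^sub>m a) B $$ (l*b+s, j*b+k))"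
      using madj_mult_index[OF U K lt lt] i j sum_reindex2 by auto
  qed
  also have "\<dots> = (\<Sum>k<b. \<Sum>l<a. \<Sum>s<b. if l = j then cnj (U $$ (l*b+s, i*b+k)) * B $$ (s, k) else 0)"
  proof (intro sum.cong refl)
    fix k l s assume k: "k \<in> {..<b}" and l: "l \<in> {..<a}" and s: "s \<in> {..<b}"
    have "kron (1\<^sub>m a) B $$ (l*b+s, j*b+k) = 1\<^sub>m a $$ (l, j) * B $$ (s, k)"
      using B k l s j lt[of l s] lt[of j k] unfolding kron_def by simp
    then show "cnj (U $$ (l*b+s, i*b+k)) * kron (1\<^sub>m a) B $$ (l*b+s, j*b+k) =
      (if l = j then cnj (U $$ (l*b+s, i*b+k)) * B $$ (s, k) else 0)"
      using l j by simp
  qed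
  also have "\<dots> = (\<Sum>k<b. \<Sum>s<b. cnj (U $$ (j*b+s, i*b+k)) * B $$ (s, k))"
  proof (rule sum.cong[OF refl])
    fix k
    have "(\<Sum>l<a. \<Sum>s<b. if l = j then cnj (U $$ (l*b+s, i*b+k)) * B $$ (s, k) else 0)
      = (\<Sum>l<a. if l = j then (\<Sum>s<b. cnj (U $$ (l*b+s, i*b+k)) * B $$ (s, k)) else 0)"
      by (intro sum.cong refl) auto
    also have "\<dots> = (\<Sum>s<b. cnj (U $$ (j*b+s, i*b+k)) * B $$ (s, k))" using j by simp
    finally show "(\<Sum>l<a. \<Sum>s<b. if l = j then cnj (U $$ (l*b+s, i*b+k)) * B $$ (s, k) else 0)
      = (\<Sum>s<b. cnj (U $$ (j*b+s, i*b+k)) * B $$ (s, k))" .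
  qed
  finally show ?thesis .
qed

lemma ptA_entry:
  assumes U: "U \<in> carrier_mat (a*b) (a*b)" and A: "A \<in> carrier_mat a a" and i: "i < b" and j: "j < b"
  shows "ptrace_A a b (madj U * kron A (1\<^sub>m b)) $$ (i, j) =
    (\<Sum>k<a. \<Sum>l<a. cnj (U $$ (l*b+j, k*b+i)) * A $$ (l, k))"
proof -
  have K: "kron A (1\<^sub>m b) \<in> carrier_mat (a*b) (a*b)" using A unfolding kron_def by simp
  have lt: "l * b + s < a * b" if "l < a" "s < b" for l s
  proof -
    have "l * b + s < l * b + b" using that by simp
    also have "\<dots> = (l + 1) * b" by simp
    also have "\<dots> \<le> a * b" using that by (intro mult_right_mono) auto
    finally show ?thesis .
  qed
  have "ptrace_A a b (madj U * kron A (1\<^sub>m b)) $$ (i, j) = (\<Sum>k<a. (madj U * kron A (1\<^sub>m b)) $$ (k*b+i, k*b+j))"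
    unfolding ptrace_A_def using i j by simp
  also have "\<dots> = (\<Sum>k<a. \<Sum>l<a. \<Sum>s<b. cnj (U $$ (l*b+s, k*b+i)) * kron A (1\<^sub>m b) $$ (l*b+s, k*b+j))"
  proof (rule sum.cong[OF refl])
    fix k assume k: "k \<in> {..<a}"
    then show "(madj U * kron A (1\<^sub>m b)) $$ (k*b+i, k*b+j) = (\<Sum>l<a. \<Sum>s<b. cnj (U $$ (l*b+s, k*b+i)) * kron A (1\<^sub>m b) $$ (l*b+s, k*b+j))"
      using madj_mult_index[OF U K lt lt] i j sum_reindex2 by auto
  qed
  also have "\<dots> = (\<Sum>k<a. \<Sum>l<a. \<Sum>s<b. if s = j then cnj (U $$ (l*b+s, k*b+i)) * A $$ (l, k) else 0)"
  proof (intro sum.cong refl)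
    fix k l s assume k: "k \<in> {..<a}" and l: "l \<in> {..<a}" and s: "s \<in> {..<b}"
    have "kron A (1\<^sub>m b) $$ (l*b+s, k*b+j) = A $$ (l, k) * 1\<^sub>m b $$ (s, j)"
      using A k l s j lt[of l s] lt[of k j] unfolding kron_def by simp
    then show "cnj (U $$ (l*b+s, k*b+i)) * kron A (1\<^sub>m b) $$ (l*b+s, k*b+j) =
      (if s = j then cnj (U $$ (l*b+s, k*b+i)) * A $$ (l, k) else 0)"
      using s j by simp
  qed
  also have "\<dots> = (\<Sum>k<a. \<Sum>l<a. cnj (U $$ (l*b+j, k*b+i)) * A $$ (l, k))"
    using j by simp
  finally show ?thesis .
qed

lemma sum4_permX:
  fixes f :: "nat \<Rightarrow> nat \<Rightarrow> nat \<Rightarrow> nat \<Rightarrow> 'c :: comm_monoid_add"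
  shows "(\<Sum>j<A. \<Sum>s<B. \<Sum>i<C. \<Sum>k<E. f i j k s) = (\<Sum>i<C. \<Sum>j<A. \<Sum>k<E. \<Sum>s<B. f i j k s)"
proof -
  have "(\<Sum>j<A. \<Sum>s<B. \<Sum>i<C. \<Sum>k<E. f i j k s) = (\<Sum>j<A. \<Sum>i<C. \<Sum>s<B. \<Sum>k<E. f i j k s)"
    by (rule sum.cong[OF refl], rule sum.swap)
  also have "\<dots> = (\<Sum>j<A. \<Sum>i<C. \<Sum>k<E. \<Sum>s<B. f i j k s)"
    by (rule sum.cong[OF refl], rule sum.cong[OF refl], rule sum.swap)
  also have "\<dots> = (\<Sum>i<C. \<Sum>j<A. \<Sum>k<E. \<Sum>s<B. f i j k s)"
    by (rule sum.swap)
  finally show ?thesis .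
qed

lemma sum4_permY:
  fixes f :: "nat \<Rightarrow> nat \<Rightarrow> nat \<Rightarrow> nat \<Rightarrow> 'c :: comm_monoid_add"
  shows "(\<Sum>l<A. \<Sum>j<B. \<Sum>k<C. \<Sum>i<E. f i j k l) = (\<Sum>i<E. \<Sum>j<B. \<Sum>k<C. \<Sum>l<A. f i j k l)"
proof -
  have "(\<Sum>l<A. \<Sum>j<B. \<Sum>k<C. \<Sum>i<E. f i j k l) = (\<Sum>l<A. \<Sum>j<B. \<Sum>i<E. \<Sum>k<C. f i j k l)"
    by (rule sum.cong[OF refl], rule sum.cong[OF refl], rule sum.swap)
  also have "\<dots> = (\<Sum>l<A. \<Sum>i<E. \<Sum>j<B. \<Sum>k<C. f i j k l)"
    by (rule sum.cong[OF refl], rule sum.swap)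
  also have "\<dots> = (\<Sum>i<E. \<Sum>l<A. \<Sum>j<B. \<Sum>k<C. f i j k l)"
    by (rule sum.swap)
  also have "\<dots> = (\<Sum>i<E. \<Sum>j<B. \<Sum>l<A. \<Sum>k<C. f i j k l)"
    by (rule sum.cong[OF refl], rule sum.swap)
  also have "\<dots> = (\<Sum>i<E. \<Sum>j<B. \<Sum>k<C. \<Sum>l<A. f i j k l)"
    by (rule sum.cong[OF refl], rule sum.cong[OF refl], rule sum.swap)
  finally show ?thesis .
qed

lemma sum5_out:
  fixes g :: "nat \<Rightarrow> nat \<Rightarrow> nat \<Rightarrow> nat \<Rightarrow> nat \<Rightarrow> 'c :: comm_monoid_add"
  shows "(\<Sum>i<A. \<Sum>j<B. \<Sum>k<C. \<Sum>s<E. \<Sum>r<R. g r i j k s) = (\<Sum>r<R. \<Sum>i<A. \<Sum>j<B. \<Sum>k<C. \<Sum>s<E. g r i j k s)"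
proof -
  have "(\<Sum>i<A. \<Sum>j<B. \<Sum>k<C. \<Sum>s<E. \<Sum>r<R. g r i j k s) = (\<Sum>i<A. \<Sum>j<B. \<Sum>k<C. \<Sum>r<R. \<Sum>s<E. g r i j k s)"
    by (rule sum.cong[OF refl], rule sum.cong[OF refl], rule sum.cong[OF refl], rule sum.swap)
  also have "\<dots> = (\<Sum>i<A. \<Sum>j<B. \<Sum>r<R. \<Sum>k<C. \<Sum>s<E. g r i j k s)"
    by (rule sum.cong[OF refl], rule sum.cong[OF refl], rule sum.swap)
  also have "\<dots> = (\<Sum>i<A. \<Sum>r<R. \<Sum>j<B. \<Sum>k<C. \<Sum>s<E. g r i j k s)"
    by (rule sum.cong[OF refl], rule sum.swap)
  also have "\<dots> = (\<Sum>r<R. \<Sum>i<A. \<Sum>j<B. \<Sum>k<C. \<Sum>s<E. g r i j k s)"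
    by (rule sum.swap)
  finally show ?thesis .
qed

definition Ubnd :: "nat \<Rightarrow> complex mat \<Rightarrow> bool" where
  "Ubnd N U \<longleftrightarrow> (\<forall>x z. cmod (bil N N U x z) \<le> sqrt (nsq N x) * sqrt (nsq N z))"

lemma sum_bound_lam:
  fixes lam :: "nat \<Rightarrow> real" and R :: nat
  assumes "\<And>r. r < R \<Longrightarrow> cmod (T r) \<le> c"
  shows "cmod (\<Sum>r<R. complex_of_real (lam r) * T r) \<le> (\<Sum>r<R. \<bar>lam r\<bar>) * c"
proof -
  have "cmod (\<Sum>r<R. complex_of_real (lam r) * T r) \<le> (\<Sum>r<R. cmod (complex_of_real (lam r) * T r))"
    by (rule norm_sum)
  also have "\<dots> \<le> (\<Sum>r<R. \<bar>lam r\<bar> * c)"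
    using assms by (intro sum_mono) (simp add: norm_mult mult_left_mono)
  also have "\<dots> = (\<Sum>r<R. \<bar>lam r\<bar>) * c" by (simp add: sum_distrib_right)
  finally show ?thesis .
qed

lemma X_bil_bound:
  fixes lam :: "nat \<Rightarrow> real" and w :: "nat \<Rightarrow> nat \<Rightarrow> complex" and R :: nat
  assumes U: "Ubnd (a*b) U"
    and X: "\<And>i j. i < a \<Longrightarrow> j < a \<Longrightarrow> Xd $$ (i, j) =
       (\<Sum>k<b. \<Sum>s<b. cnj (U $$ (j*b+s, i*b+k)) * (\<Sum>r<R. complex_of_real (lam r) * w r s * cnj (w r k)))"
    and w: "\<And>r. r < R \<Longrightarrow> nsq b (w r) \<le> 1"
  shows "cmod (bil a a Xd y v) \<le> (\<Sum>r<R. \<bar>lam r\<bar>) * (sqrt (nsq a y) * sqrt (nsq a v))"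
proof -
  define T where "T r = (\<Sum>i<a. \<Sum>j<a. \<Sum>k<b. \<Sum>s<b. cnj (y i) * cnj (U $$ (j*b+s, i*b+k)) * (w r s * cnj (w r k)) * v j)" for r
  have "bil a a Xd y v = (\<Sum>i<a. \<Sum>j<a. \<Sum>k<b. \<Sum>s<b. \<Sum>r<R.
      complex_of_real (lam r) * (cnj (y i) * cnj (U $$ (j*b+s, i*b+k)) * (w r s * cnj (w r k)) * v j))"
    unfolding bil_def
    by (intro sum.cong refl) (simp add: X sum_distrib_left sum_distrib_right mult_ac)
  also have "\<dots> = (\<Sum>r<R. \<Sum>i<a. \<Sum>j<a. \<Sum>k<b. \<Sum>s<b.
      complex_of_real (lam r) * (cnj (y i) * cnj (U $$ (j*b+s, i*b+k)) * (w r s * cnj (w r k)) * v j))"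
    by (rule sum5_out[where g = "\<lambda>r i j k s. complex_of_real (lam r) * (cnj (y i) * cnj (U $$ (j*b+s, i*b+k)) * (w r s * cnj (w r k)) * v j)"])
  also have "\<dots> = (\<Sum>r<R. complex_of_real (lam r) * T r)"
    unfolding T_def by (simp add: sum_distrib_left)
  finally have eq: "bil a a Xd y v = (\<Sum>r<R. complex_of_real (lam r) * T r)" .
  have Tb: "cmod (T r) \<le> sqrt (nsq a y) * sqrt (nsq a v)" if r: "r < R" for r
  proof -
    define V where "V t = v (t div b) * w r (t mod b)" for t
    define Y where "Y t = y (t div b) * w r (t mod b)" for t
    have "bil (a*b) (a*b) U V Y = (\<Sum>j<a. \<Sum>s<b. \<Sum>i<a. \<Sum>k<b.
        cnj (V (j*b+s)) * U $$ (j*b+s, i*b+k) * Y (i*b+k))"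
      unfolding bil_def sum_reindex2 ..
    also have "\<dots> = (\<Sum>j<a. \<Sum>s<b. \<Sum>i<a. \<Sum>k<b.
        cnj (v j * w r s) * U $$ (j*b+s, i*b+k) * (y i * w r k))"
    proof -
      have "b > 0 \<or> (\<Sum>j<a. \<Sum>s<b. \<Sum>i<a. \<Sum>k<b. cnj (V (j*b+s)) * U $$ (j*b+s, i*b+k) * Y (i*b+k)) = 0 \<and>
          (\<Sum>j<a. \<Sum>s<b. \<Sum>i<a. \<Sum>k<b. cnj (v j * w r s) * U $$ (j*b+s, i*b+k) * (y i * w r k)) = 0"
        by auto
      then show ?thesis unfolding V_def Y_def by (elim disjE) (auto intro!: sum.cong)
    qed
    finally have "cnj (bil (a*b) (a*b) U V Y) = (\<Sum>j<a. \<Sum>s<b. \<Sum>i<a. \<Sum>k<b.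
        cnj (y i) * cnj (U $$ (j*b+s, i*b+k)) * (w r s * cnj (w r k)) * v j)"
      by (simp add: cnj_sum mult_ac)
    also have "\<dots> = T r" unfolding T_def
      by (rule sum4_permX[where f = "\<lambda>i j k s. cnj (y i) * cnj (U $$ (j*b+s, i*b+k)) * (w r s * cnj (w r k)) * v j"])
    finally have Teq: "T r = cnj (bil (a*b) (a*b) U V Y)" by simp
    have "cmod (T r) \<le> sqrt (nsq (a*b) V) * sqrt (nsq (a*b) Y)"
      unfolding Teq complex_mod_cnj using U unfolding Ubnd_def by blast
    also have "nsq (a*b) V = nsq a v * nsq b (w r)" unfolding V_def by (rule tensor_nsq)
    also have "nsq (a*b) Y = nsq a y * nsq b (w r)" unfolding Y_def by (rule tensor_nsq)
    also have "sqrt (nsq a v * nsq b (w r)) * sqrt (nsq a y * nsq b (w r)) \<le> sqrt (nsq a v * 1) * sqrt (nsq a y * 1)"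
      using w[OF r] nsq_nonneg[of a v] nsq_nonneg[of a y] nsq_nonneg[of b "w r"]
      by (intro mult_mono real_sqrt_le_mono mult_left_mono) auto
    finally show ?thesis by (simp add: mult.commute)
  qed
  show ?thesis unfolding eq by (rule sum_bound_lam[OF Tb])
qed

lemma Y_bil_bound:
  fixes lam :: "nat \<Rightarrow> real" and w :: "nat \<Rightarrow> nat \<Rightarrow> complex" and R :: nat
  assumes U: "Ubnd (a*b) U"
    and X: "\<And>i j. i < b \<Longrightarrow> j < b \<Longrightarrow> Xd $$ (i, j) =
       (\<Sum>k<a. \<Sum>s<a. cnj (U $$ (s*b+j, k*b+i)) * (\<Sum>r<R. complex_of_real (lam r) * w r s * cnj (w r k)))"
    and w: "\<And>r. r < R \<Longrightarrow> nsq a (w r) \<le> 1"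
  shows "cmod (bil b b Xd y v) \<le> (\<Sum>r<R. \<bar>lam r\<bar>) * (sqrt (nsq b y) * sqrt (nsq b v))"
proof -
  define T where "T r = (\<Sum>i<b. \<Sum>j<b. \<Sum>k<a. \<Sum>s<a. cnj (y i) * cnj (U $$ (s*b+j, k*b+i)) * (w r s * cnj (w r k)) * v j)" for r
  have "bil b b Xd y v = (\<Sum>i<b. \<Sum>j<b. \<Sum>k<a. \<Sum>s<a. \<Sum>r<R.
      complex_of_real (lam r) * (cnj (y i) * cnj (U $$ (s*b+j, k*b+i)) * (w r s * cnj (w r k)) * v j))"
    unfolding bil_def
    by (intro sum.cong refl) (simp add: X sum_distrib_left sum_distrib_right mult_ac)
  also have "\<dots> = (\<Sum>r<R. \<Sum>i<b. \<Sum>j<b. \<Sum>k<a. \<Sum>s<a.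
      complex_of_real (lam r) * (cnj (y i) * cnj (U $$ (s*b+j, k*b+i)) * (w r s * cnj (w r k)) * v j))"
    by (rule sum5_out[where g = "\<lambda>r i j k s. complex_of_real (lam r) * (cnj (y i) * cnj (U $$ (s*b+j, k*b+i)) * (w r s * cnj (w r k)) * v j)"])
  also have "\<dots> = (\<Sum>r<R. complex_of_real (lam r) * T r)"
    unfolding T_def by (simp add: sum_distrib_left)
  finally have eq: "bil b b Xd y v = (\<Sum>r<R. complex_of_real (lam r) * T r)" .
  have Tb: "cmod (T r) \<le> sqrt (nsq b y) * sqrt (nsq b v)" if r: "r < R" for r
  proof -
    define V where "V t = w r (t div b) * v (t mod b)" for t
    define Y where "Y t = w r (t div b) * y (t mod b)" for t
    have "bil (a*b) (a*b) U V Y = (\<Sum>s<a. \<Sum>j<b. \<Sum>k<a. \<Sum>i<b.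
        cnj (V (s*b+j)) * U $$ (s*b+j, k*b+i) * Y (k*b+i))"
      unfolding bil_def sum_reindex2 ..
    also have "\<dots> = (\<Sum>s<a. \<Sum>j<b. \<Sum>k<a. \<Sum>i<b.
        cnj (w r s * v j) * U $$ (s*b+j, k*b+i) * (w r k * y i))"
      unfolding V_def Y_def by (auto intro!: sum.cong)
    finally have "cnj (bil (a*b) (a*b) U V Y) = (\<Sum>s<a. \<Sum>j<b. \<Sum>k<a. \<Sum>i<b.
        cnj (y i) * cnj (U $$ (s*b+j, k*b+i)) * (w r s * cnj (w r k)) * v j)"
      by (simp add: cnj_sum mult_ac)
    also have "\<dots> = T r" unfolding T_def
      by (rule sum4_permY[where f = "\<lambda>i j k s. cnj (y i) * cnj (U $$ (s*b+j, k*b+i)) * (w r s * cnj (w r k)) * v j"])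
    finally have Teq: "T r = cnj (bil (a*b) (a*b) U V Y)" by simp
    have "cmod (T r) \<le> sqrt (nsq (a*b) V) * sqrt (nsq (a*b) Y)"
      unfolding Teq complex_mod_cnj using U unfolding Ubnd_def by blast
    also have "nsq (a*b) V = nsq a (w r) * nsq b v" unfolding V_def by (rule tensor_nsq)
    also have "nsq (a*b) Y = nsq a (w r) * nsq b y" unfolding Y_def by (rule tensor_nsq)
    also have "sqrt (nsq a (w r) * nsq b v) * sqrt (nsq a (w r) * nsq b y) \<le> sqrt (1 * nsq b v) * sqrt (1 * nsq b y)"
      using w[OF r] nsq_nonneg[of b v] nsq_nonneg[of b y] nsq_nonneg[of a "w r"]
      by (intro mult_mono real_sqrt_le_mono mult_left_mono) auto
    finally show ?thesis by (simp add: mult.commute)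
  qed
  show ?thesis unfolding eq by (rule sum_bound_lam[OF Tb])
qed

lemma mv_index:
  assumes "A \<in> carrier_mat r c" "v \<in> carrier_vec c" "i < r"
  shows "(A *\<^sub>v v) $ i = (\<Sum>j<c. A $$ (i, j) * v $ j)"
  using assms by (simp add: scalar_prod_def atLeast0LessThan)

lemma sq_le_imp:
  fixes Y K Z :: real
  assumes "0 \<le> Y" "Y * Y \<le> K * (Y * Z)" "0 \<le> K" "0 \<le> Z"
  shows "Y \<le> K * Z"
proof (cases "Y = 0")
  case True
  then show ?thesis using assms by simp
next
  case False
  then have "Y > 0" using assms(1) by simp
  moreover have "Y * Y \<le> (K * Z) * Y" using assms(2) by (simp add: algebra_simps)
  ultimately show ?thesis by simp
qed

lemma op_norm_le:
  assumes A: "A \<in> carrier_mat r c" and K: "0 \<le> K"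
    and B: "\<And>y v. cmod (bil r c A y v) \<le> K * (sqrt (nsq r y) * sqrt (nsq c v))"
  shows "op_norm A \<le> K"
  unfolding op_norm_def
proof (rule cSup_least)
  have z1: "cvec_norm (0\<^sub>v (dim_col A)) \<le> 1" unfolding cvec_norm_def by simp
  have "cvec_norm (A *\<^sub>v 0\<^sub>v (dim_col A)) \<in> {cvec_norm (A *\<^sub>v v) |v. v \<in> carrier_vec (dim_col A) \<and> cvec_norm v \<le> 1}"
    by (rule CollectI, rule exI[of _ "0\<^sub>v (dim_col A)"]) (use z1 in simp)
  then show "{cvec_norm (A *\<^sub>v v) |v. v \<in> carrier_vec (dim_col A) \<and> cvec_norm v \<le> 1} \<noteq> {}"
    by (metis empty_iff)
next
  fix x assume "x \<in> {cvec_norm (A *\<^sub>v v) |v. v \<in> carrier_vec (dim_col A) \<and> cvec_norm v \<le> 1}"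
  then obtain v where x: "x = cvec_norm (A *\<^sub>v v)" and v0: "v \<in> carrier_vec (dim_col A)" and v1: "cvec_norm v \<le> 1"
    by blast
  have v: "v \<in> carrier_vec c" using v0 A by simp
  define y where "y = (\<lambda>i. (A *\<^sub>v v) $ i)"
  define z where "z = (\<lambda>j. v $ j)"
  have dv: "dim_vec (A *\<^sub>v v) = r" using A by simp
  have xy: "x = sqrt (nsq r y)" unfolding x cvec_norm_def nsq_def y_def dv ..
  have dv2: "dim_vec v = c" using v by simp
  have vz: "cvec_norm v = sqrt (nsq c z)" unfolding cvec_norm_def nsq_def z_def dv2 ..
  have "bil r c A y z = (\<Sum>i<r. cnj (y i) * y i)"
    unfolding bil_def
  proof (rule sum.cong[OF refl])
    fix i assume i: "i \<in> {..<r}"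
    have "(\<Sum>j<c. cnj (y i) * A $$ (i, j) * z j) = cnj (y i) * (\<Sum>j<c. A $$ (i, j) * z j)"
      by (simp add: sum_distrib_left mult.assoc)
    also have "(\<Sum>j<c. A $$ (i, j) * z j) = y i"
      unfolding y_def z_def using mv_index[OF A v] i by simp
    finally show "(\<Sum>j<c. cnj (y i) * A $$ (i, j) * z j) = cnj (y i) * y i" .
  qed
  also have "\<dots> = ip r y y" unfolding ip_def ..
  also have "\<dots> = complex_of_real (nsq r y)" by (rule ip_self)
  finally have "cmod (complex_of_real (nsq r y)) \<le> K * (sqrt (nsq r y) * sqrt (nsq c z))"
    using B[of y z] by simp
  then have "nsq r y \<le> K * (sqrt (nsq r y) * sqrt (nsq c z))"
    using nsq_nonneg[of r y] by simp
  moreover have "nsq r y = sqrt (nsq r y) * sqrt (nsq r y)"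
    using nsq_nonneg[of r y] by simp
  ultimately have yy: "sqrt (nsq r y) * sqrt (nsq r y) \<le> K * (sqrt (nsq r y) * sqrt (nsq c z))"
    by simp
  have "sqrt (nsq r y) \<le> K * sqrt (nsq c z)"
    by (rule sq_le_imp[OF _ yy K]) (simp_all add: nsq_nonneg)
  also have "\<dots> \<le> K * 1" using v1 vz K by (intro mult_left_mono) auto
  finally show "x \<le> K" using xy by simp
qed

lemma sum_split:
  fixes f :: "nat \<Rightarrow> 'c :: comm_monoid_add"
  shows "(\<Sum>i<a+b. f i) = (\<Sum>i<a. f i) + (\<Sum>i<b. f (a+i))"
  by (induction b) (auto simp: add.assoc)

lemma blockdiag_carrier:
  "A \<in> carrier_mat a a \<Longrightarrow> B \<in> carrier_mat b b \<Longrightarrow> blockdiag A B \<in> carrier_mat (a+b) (a+b)"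
  unfolding blockdiag_def by auto

lemma blockdiag_index:
  assumes "A \<in> carrier_mat a a" "B \<in> carrier_mat b b" "i < a+b" "j < a+b"
  shows "blockdiag A B $$ (i, j) = (if i < a then (if j < a then A $$ (i, j) else 0)
      else (if j < a then 0 else B $$ (i-a, j-a)))"
  using assms unfolding blockdiag_def by (simp add: index_mat_four_block)

lemma bil_blockdiag:
  assumes A: "A \<in> carrier_mat a a" and B: "B \<in> carrier_mat b b"
  shows "bil (a+b) (a+b) (blockdiag A B) y v = bil a a A y v + bil b b B (\<lambda>i. y (a+i)) (\<lambda>i. v (a+i))"
  unfolding bil_def sum_split
  using A B by (simp add: blockdiag_index)

lemma nsq_split: "nsq (a+b) (y :: nat \<Rightarrow> complex) = nsq a y + nsq b (\<lambda>i. y (a+i))"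
  unfolding nsq_def sum_split ..

lemma op_norm_blockdiag:
  assumes A: "A \<in> carrier_mat a a" and B: "B \<in> carrier_mat b b" and K: "0 \<le> K"
    and bA: "\<And>y v. cmod (bil a a A y v) \<le> K * (sqrt (nsq a y) * sqrt (nsq a v))"
    and bB: "\<And>y v. cmod (bil b b B y v) \<le> K * (sqrt (nsq b y) * sqrt (nsq b v))"
  shows "op_norm (blockdiag A B) \<le> 2 * K"
proof (rule op_norm_le[OF blockdiag_carrier[OF A B]])
  show "0 \<le> 2 * K" using K by simp
  fix y v :: "nat \<Rightarrow> complex"
  define y2 where "y2 = (\<lambda>i. y (a+i))"
  define v2 where "v2 = (\<lambda>i. v (a+i))"
  have ly: "sqrt (nsq a y) \<le> sqrt (nsq (a+b) y)" "sqrt (nsq b y2) \<le> sqrt (nsq (a+b) y)"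
    unfolding nsq_split y2_def using nsq_nonneg by auto
  have lv: "sqrt (nsq a v) \<le> sqrt (nsq (a+b) v)" "sqrt (nsq b v2) \<le> sqrt (nsq (a+b) v)"
    unfolding nsq_split v2_def using nsq_nonneg by auto
  have "cmod (bil (a+b) (a+b) (blockdiag A B) y v) \<le> cmod (bil a a A y v) + cmod (bil b b B y2 v2)"
    unfolding bil_blockdiag[OF A B] y2_def v2_def by (rule norm_triangle_ineq)
  also have "\<dots> \<le> K * (sqrt (nsq a y) * sqrt (nsq a v)) + K * (sqrt (nsq b y2) * sqrt (nsq b v2))"
    using bA bB by (rule add_mono)
  also have "\<dots> \<le> K * (sqrt (nsq (a+b) y) * sqrt (nsq (a+b) v)) + K * (sqrt (nsq (a+b) y) * sqrt (nsq (a+b) v))"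
    using ly lv K nsq_nonneg by (intro add_mono mult_left_mono mult_mono) auto
  finally show "cmod (bil (a+b) (a+b) (blockdiag A B) y v) \<le> 2 * K * (sqrt (nsq (a+b) y) * sqrt (nsq (a+b) v))"
    by (simp add: mult_ac)
qed

definition fsq :: "nat \<Rightarrow> nat \<Rightarrow> complex mat \<Rightarrow> real" where
  "fsq r c A = (\<Sum>i<r. \<Sum>j<c. (cmod (A $$ (i, j)))^2)"

lemma fsq_nonneg: "0 \<le> fsq r c A"
  unfolding fsq_def by (intro sum_nonneg) auto

lemma frob_fsq: "A \<in> carrier_mat r c \<Longrightarrow> frob_norm A = sqrt (fsq r c A)"
  unfolding frob_norm_def fsq_def by simp

lemma fsq_blockdiag:
  assumes A: "A \<in> carrier_mat a a" and B: "B \<in> carrier_mat b b"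
  shows "fsq (a+b) (a+b) (blockdiag A B) = fsq a a A + fsq b b B"
  unfolding fsq_def sum_split using A B by (simp add: blockdiag_index)

lemma sum_sq_le:
  fixes f :: "nat \<Rightarrow> real"
  shows "(\<Sum>i<n. f i)^2 \<le> real n * (\<Sum>i<n. (f i)^2)"
proof (cases "n = 0")
  case True
  then show ?thesis by simp
next
  case False
  define S where "S = (\<Sum>i<n. f i)"
  define m where "m = S / real n"
  have "0 \<le> (\<Sum>i<n. (f i - m)^2)" by (intro sum_nonneg) auto
  also have "\<dots> = (\<Sum>i<n. (f i)^2) - 2 * m * S + real n * m^2"
    unfolding S_def by (simp add: power2_diff sum.distrib sum_subtractf sum_distrib_left mult_ac)
  also have "\<dots> = (\<Sum>i<n. (f i)^2) - S^2 / real n"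
    using False unfolding m_def by (simp add: field_simps power2_eq_square)
  finally have "S^2 / real n \<le> (\<Sum>i<n. (f i)^2)" by simp
  then show ?thesis using False unfolding S_def by (simp add: field_simps)
qed

lemma Ubnd_entry:
  assumes U: "Ubnd N U" and p: "p < N" and q: "q < N"
  shows "cmod (U $$ (p, q)) \<le> 1"
proof -
  define e where "e t = (\<lambda>i::nat. if i = t then (1::complex) else 0)" for t :: nat
  have ne: "nsq N (e t) = 1" if t: "t < N" for t
  proof -
    have "(\<Sum>i<N. (cmod (e t i))^2) = (\<Sum>i<N. if i = t then 1 else 0)"
      by (intro sum.cong refl) (auto simp: e_def)
    then show ?thesis unfolding nsq_def using t by simp
  qed
  have inner: "(\<Sum>j<N. cnj (e p i) * U $$ (i, j) * e q j) = cnj (e p i) * U $$ (i, q)" for i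
  proof -
    have "(\<Sum>j<N. cnj (e p i) * U $$ (i, j) * e q j) = (\<Sum>j<N. if j = q then cnj (e p i) * U $$ (i, q) else 0)"
      by (intro sum.cong refl) (simp add: e_def)
    then show ?thesis using q by simp
  qed
  have "bil N N U (e p) (e q) = (\<Sum>i<N. cnj (e p i) * U $$ (i, q))"
    unfolding bil_def inner ..
  also have "\<dots> = (\<Sum>i<N. if i = p then U $$ (p, q) else 0)"
    by (intro sum.cong refl) (simp add: e_def)
  also have "\<dots> = U $$ (p, q)" using p by simp
  finally have be: "bil N N U (e p) (e q) = U $$ (p, q)" .
  have "cmod (bil N N U (e p) (e q)) \<le> sqrt (nsq N (e p)) * sqrt (nsq N (e q))"
    using U unfolding Ubnd_def by blast
  then show ?thesis unfolding be ne[OF p] ne[OF q] by simp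
qed

lemma double_sum_sq:
  fixes g :: "nat \<Rightarrow> nat \<Rightarrow> real"
  shows "(\<Sum>k<b. \<Sum>s<b. g k s)^2 \<le> (real b)^2 * (\<Sum>k<b. \<Sum>s<b. (g k s)^2)"
proof -
  have "(\<Sum>k<b. \<Sum>s<b. g k s)^2 \<le> real b * (\<Sum>k<b. (\<Sum>s<b. g k s)^2)" by (rule sum_sq_le)
  also have "\<dots> \<le> real b * (\<Sum>k<b. real b * (\<Sum>s<b. (g k s)^2))"
    by (intro mult_left_mono sum_mono sum_sq_le) auto
  also have "\<dots> = (real b)^2 * (\<Sum>k<b. \<Sum>s<b. (g k s)^2)"
    by (simp add: sum_distrib_left power2_eq_square mult_ac)
  finally show ?thesis .
qed

lemma fsq_entry_bound:
  assumes "\<And>i j. i < a \<Longrightarrow> j < a \<Longrightarrow> cmod (M $$ (i, j)) \<le> S"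
  shows "fsq a a M \<le> (real a)^2 * S^2"
proof -
  have "fsq a a M \<le> (\<Sum>i<a. \<Sum>j<a. S^2)"
    unfolding fsq_def using assms by (intro sum_mono power_mono) auto
  also have "\<dots> = (real a)^2 * S^2" by (simp add: power2_eq_square)
  finally show ?thesis .
qed

lemma ptB_carrier: "ptrace_B a b M \<in> carrier_mat a a" unfolding ptrace_B_def by simp
lemma ptA_carrier: "ptrace_A a b M \<in> carrier_mat b b" unfolding ptrace_A_def by simp

lemma Xd_entry:
  assumes U: "U \<in> carrier_mat (a*b) (a*b)" and B: "B \<in> carrier_mat b b" and B': "B' \<in> carrier_mat b b"
    and i: "i < a" and j: "j < a"
  shows "(ptrace_B a b (madj U * kron (1\<^sub>m a) B) - ptrace_B a b (madj U * kron (1\<^sub>m a) B')) $$ (i, j)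
     = (\<Sum>k<b. \<Sum>s<b. cnj (U $$ (j*b+s, i*b+k)) * (B - B') $$ (s, k))"
proof -
  have "(ptrace_B a b (madj U * kron (1\<^sub>m a) B) - ptrace_B a b (madj U * kron (1\<^sub>m a) B')) $$ (i, j)
     = ptrace_B a b (madj U * kron (1\<^sub>m a) B) $$ (i, j) - ptrace_B a b (madj U * kron (1\<^sub>m a) B') $$ (i, j)"
    unfolding ptrace_B_def using i j by simp
  also have "\<dots> = (\<Sum>k<b. \<Sum>s<b. cnj (U $$ (j*b+s, i*b+k)) * B $$ (s, k) - cnj (U $$ (j*b+s, i*b+k)) * B' $$ (s, k))"
    unfolding ptB_entry[OF U B i j] ptB_entry[OF U B' i j] by (simp add: sum_subtractf)
  also have "\<dots> = (\<Sum>k<b. \<Sum>s<b. cnj (U $$ (j*b+s, i*b+k)) * (B - B') $$ (s, k))"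
    using B B' by (intro sum.cong refl) (simp add: right_diff_distrib)
  finally show ?thesis .
qed

lemma Yd_entry:
  assumes U: "U \<in> carrier_mat (a*b) (a*b)" and A: "A \<in> carrier_mat a a" and A': "A' \<in> carrier_mat a a"
    and i: "i < b" and j: "j < b"
  shows "(- (- ptrace_A a b (madj U * kron A (1\<^sub>m b)) - - ptrace_A a b (madj U * kron A' (1\<^sub>m b)))) $$ (i, j)
     = (\<Sum>k<a. \<Sum>l<a. cnj (U $$ (l*b+j, k*b+i)) * (A - A') $$ (l, k))"
proof -
  have "(- (- ptrace_A a b (madj U * kron A (1\<^sub>m b)) - - ptrace_A a b (madj U * kron A' (1\<^sub>m b)))) $$ (i, j)
     = ptrace_A a b (madj U * kron A (1\<^sub>m b)) $$ (i, j) - ptrace_A a b (madj U * kron A' (1\<^sub>m b)) $$ (i, j)"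
    unfolding ptrace_A_def using i j by simp
  also have "\<dots> = (\<Sum>k<a. \<Sum>l<a. cnj (U $$ (l*b+j, k*b+i)) * A $$ (l, k) - cnj (U $$ (l*b+j, k*b+i)) * A' $$ (l, k))"
    unfolding ptA_entry[OF U A i j] ptA_entry[OF U A' i j] by (simp add: sum_subtractf)
  also have "\<dots> = (\<Sum>k<a. \<Sum>l<a. cnj (U $$ (l*b+j, k*b+i)) * (A - A') $$ (l, k))"
    using A A' by (intro sum.cong refl) (simp add: right_diff_distrib)
  finally show ?thesis .
qed

lemma bil_uminus: "A \<in> carrier_mat r c \<Longrightarrow> bil r c (- A) y v = - bil r c A y v"
  unfolding bil_def by (simp add: sum_negf)

lemma entry_sum_bound:
  assumes U: "Ubnd (a*b) U" and idx: "\<And>k s. k < K \<Longrightarrow> s < K \<Longrightarrow> p k s < a*b \<and> q k s < a*b"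
  shows "cmod (\<Sum>k<K. \<Sum>s<K. cnj (U $$ (p k s, q k s)) * D s k) \<le> (\<Sum>k<K. \<Sum>s<K. cmod (D s k))"
proof -
  have "cmod (\<Sum>k<K. \<Sum>s<K. cnj (U $$ (p k s, q k s)) * D s k) \<le> (\<Sum>k<K. cmod (\<Sum>s<K. cnj (U $$ (p k s, q k s)) * D s k))"
    by (rule norm_sum)
  also have "\<dots> \<le> (\<Sum>k<K. \<Sum>s<K. cmod (cnj (U $$ (p k s, q k s)) * D s k))"
    by (intro sum_mono norm_sum)
  also have "\<dots> \<le> (\<Sum>k<K. \<Sum>s<K. cmod (D s k))"
  proof (intro sum_mono)
    fix k s assume k: "k \<in> {..<K}" and s: "s \<in> {..<K}"
    have "cmod (U $$ (p k s, q k s)) \<le> 1" using Ubnd_entry[OF U] idx k s by auto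
    then show "cmod (cnj (U $$ (p k s, q k s)) * D s k) \<le> cmod (D s k)"
      by (simp add: norm_mult mult_left_le_one_le)
  qed
  finally show ?thesis .
qed

lemma idx_lt: "l < a \<Longrightarrow> s < (b::nat) \<Longrightarrow> l * b + s < a * b"
proof -
  assume l: "l < a" and s: "s < b"
  have "l * b + s < l * b + b" using s by simp
  also have "\<dots> = (l + 1) * b" by simp
  also have "\<dots> \<le> a * b" using l by (intro mult_right_mono) auto
  finally show ?thesis .
qed

lemma fsq_swap_bound:
  fixes D :: "complex mat"
  shows "(\<Sum>k<b. \<Sum>s<b. cmod (D $$ (s, k)))^2 \<le> (real b)^2 * fsq b b D"
proof -
  have "(\<Sum>k<b. \<Sum>s<b. cmod (D $$ (s, k)))^2 \<le> (real b)^2 * (\<Sum>k<b. \<Sum>s<b. (cmod (D $$ (s, k)))^2)"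
    by (rule double_sum_sq)
  also have "(\<Sum>k<b. \<Sum>s<b. (cmod (D $$ (s, k)))^2) = fsq b b D"
    unfolding fsq_def by (rule sum.swap)
  finally show ?thesis .
qed

lemma density_carrier: "density N A \<Longrightarrow> A \<in> carrier_mat N N"
  unfolding density_def psd_def by blast

lemma density_psd: "density N A \<Longrightarrow> psd N A"
  unfolding density_def by blast

lemma part1:
  fixes n m :: nat
  assumes P: "povm (2^(n+m)) Omega P" and u: "\<forall>w\<in>Omega. \<bar>u w\<bar> \<le> 1"
    and da: "density (2^n) \<alpha>" and db: "density (2^m) \<beta>"
    and da': "density (2^n) \<alpha>'" and db': "density (2^m) \<beta>'"
  defines "U \<equiv> payoff_obs (2^(n+m)) Omega P u"
  shows "frob_norm (blockdiag (fst (game_F n m U \<alpha> \<beta>) - fst (game_F n m U \<alpha>' \<beta>'))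
                               (snd (game_F n m U \<alpha> \<beta>) - snd (game_F n m U \<alpha>' \<beta>')))
         \<le> 2^(n+m) * frob_norm (blockdiag (\<alpha> - \<alpha>') (\<beta> - \<beta>'))"
proof -
  define a :: nat where "a = 2^n"
  define b :: nat where "b = 2^m"
  have N: "(2::nat)^(n+m) = a * b" unfolding a_def b_def by (simp add: power_add)
  have Uc: "U \<in> carrier_mat (a*b) (a*b)" unfolding U_def N by (rule payoff_carrier)
  have Ub: "Ubnd (a*b) U" unfolding Ubnd_def U_def N using U_bound[OF P[unfolded N] u] by blast
  have ac: "\<alpha> \<in> carrier_mat a a" "\<alpha>' \<in> carrier_mat a a" using da da' density_carrier unfolding a_def by auto
  have bc: "\<beta> \<in> carrier_mat b b" "\<beta>' \<in> carrier_mat b b" using db db' density_carrier unfolding b_def by auto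
  define Xd where "Xd = fst (game_F n m U \<alpha> \<beta>) - fst (game_F n m U \<alpha>' \<beta>')"
  define Yd where "Yd = snd (game_F n m U \<alpha> \<beta>) - snd (game_F n m U \<alpha>' \<beta>')"
  have Xd: "Xd = ptrace_B a b (madj U * kron (1\<^sub>m a) \<beta>) - ptrace_B a b (madj U * kron (1\<^sub>m a) \<beta>')"
    unfolding Xd_def game_F_def a_def b_def by simp
  have Yd: "Yd = - ptrace_A a b (madj U * kron \<alpha> (1\<^sub>m b)) - - ptrace_A a b (madj U * kron \<alpha>' (1\<^sub>m b))"
    unfolding Yd_def game_F_def a_def b_def by simp
  have Xc: "Xd \<in> carrier_mat a a" unfolding Xd by (rule minus_carrier_mat[OF ptB_carrier])
  have Yc: "Yd \<in> carrier_mat b b" unfolding Yd by (rule minus_carrier_mat, rule uminus_carrier_mat[OF ptA_carrier])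
  define Da where "Da = \<alpha> - \<alpha>'"
  define Db where "Db = \<beta> - \<beta>'"
  have Dac: "Da \<in> carrier_mat a a" unfolding Da_def using ac(2) by (rule minus_carrier_mat)
  have Dbc: "Db \<in> carrier_mat b b" unfolding Db_def using bc(2) by (rule minus_carrier_mat)
  define Sb where "Sb = (\<Sum>k<b. \<Sum>s<b. cmod (Db $$ (s, k)))"
  define Sa where "Sa = (\<Sum>k<a. \<Sum>l<a. cmod (Da $$ (l, k)))"
  have Xe: "cmod (Xd $$ (i, j)) \<le> Sb" if i: "i < a" and j: "j < a" for i j
    unfolding Xd Xd_entry[OF Uc bc i j] Sb_def Db_def
    by (rule entry_sum_bound[OF Ub]) (use i j idx_lt in auto)
  have Ye: "cmod (Yd $$ (i, j)) \<le> Sa" if i: "i < b" and j: "j < b" for i j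
  proof -
    have "cmod (Yd $$ (i, j)) = cmod ((- Yd) $$ (i, j))" using Yc i j by simp
    also have "\<dots> \<le> Sa"
      unfolding Yd Yd_entry[OF Uc ac i j] Sa_def Da_def
      by (rule entry_sum_bound[OF Ub]) (use i j idx_lt in auto)
    finally show ?thesis .
  qed
  have fX: "fsq a a Xd \<le> (real a)^2 * Sb^2" by (rule fsq_entry_bound[OF Xe])
  have fY: "fsq b b Yd \<le> (real b)^2 * Sa^2" by (rule fsq_entry_bound[OF Ye])
  have sb: "Sb^2 \<le> (real b)^2 * fsq b b Db" unfolding Sb_def by (rule fsq_swap_bound)
  have sa: "Sa^2 \<le> (real a)^2 * fsq a a Da" unfolding Sa_def by (rule fsq_swap_bound)
  have "fsq (a+b) (a+b) (blockdiag Xd Yd) = fsq a a Xd + fsq b b Yd" by (rule fsq_blockdiag[OF Xc Yc])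
  also have "\<dots> \<le> (real a)^2 * ((real b)^2 * fsq b b Db) + (real b)^2 * ((real a)^2 * fsq a a Da)"
  proof (rule add_mono)
    show "fsq a a Xd \<le> (real a)^2 * ((real b)^2 * fsq b b Db)"
      using fX mult_left_mono[OF sb, of "(real a)^2"] by simp
    show "fsq b b Yd \<le> (real b)^2 * ((real a)^2 * fsq a a Da)"
      using fY mult_left_mono[OF sa, of "(real b)^2"] by simp
  qed
  also have "\<dots> = (real a * real b)^2 * (fsq a a Da + fsq b b Db)"
    by (simp add: algebra_simps power_mult_distrib)
  also have "fsq a a Da + fsq b b Db = fsq (a+b) (a+b) (blockdiag Da Db)"
    by (rule fsq_blockdiag[OF Dac Dbc, symmetric])
  finally have le: "fsq (a+b) (a+b) (blockdiag Xd Yd) \<le> (real a * real b)^2 * fsq (a+b) (a+b) (blockdiag Da Db)" .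
  have "frob_norm (blockdiag Xd Yd) = sqrt (fsq (a+b) (a+b) (blockdiag Xd Yd))"
    by (rule frob_fsq[OF blockdiag_carrier[OF Xc Yc]])
  also have "\<dots> \<le> sqrt ((real a * real b)^2 * fsq (a+b) (a+b) (blockdiag Da Db))"
    using le by (rule real_sqrt_le_mono)
  also have "\<dots> = real a * real b * sqrt (fsq (a+b) (a+b) (blockdiag Da Db))"
    by (simp add: real_sqrt_mult)
  also have "\<dots> = 2^(n+m) * frob_norm (blockdiag Da Db)"
    unfolding frob_fsq[OF blockdiag_carrier[OF Dac Dbc]] a_def b_def by (simp add: power_add)
  finally show ?thesis unfolding Xd_def Yd_def Da_def Db_def .
qed

lemma part2:
  fixes n m :: nat
  assumes P: "povm (2^(n+m)) Omega P" and u: "\<forall>w\<in>Omega. \<bar>u w\<bar> \<le> 1"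
    and da: "density (2^n) \<alpha>" and db: "density (2^m) \<beta>"
    and da': "density (2^n) \<alpha>'" and db': "density (2^m) \<beta>'"
  defines "U \<equiv> payoff_obs (2^(n+m)) Omega P u"
  shows "op_norm (blockdiag (fst (game_F n m U \<alpha> \<beta>) - fst (game_F n m U \<alpha>' \<beta>'))
                               (snd (game_F n m U \<alpha> \<beta>) - snd (game_F n m U \<alpha>' \<beta>')))
         \<le> 2 * trace_norm (blockdiag (\<alpha> - \<alpha>') (\<beta> - \<beta>'))"
proof -
  define a :: nat where "a = 2^n"
  define b :: nat where "b = 2^m"
  have N: "(2::nat)^(n+m) = a * b" unfolding a_def b_def by (simp add: power_add)
  have Uc: "U \<in> carrier_mat (a*b) (a*b)" unfolding U_def N by (rule payoff_carrier)
  have Ub: "Ubnd (a*b) U" unfolding Ubnd_def U_def N using U_bound[OF P[unfolded N] u] by blast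
  have ac: "\<alpha> \<in> carrier_mat a a" "\<alpha>' \<in> carrier_mat a a" using da da' density_carrier unfolding a_def by auto
  have bc: "\<beta> \<in> carrier_mat b b" "\<beta>' \<in> carrier_mat b b" using db db' density_carrier unfolding b_def by auto
  have ap: "psd a \<alpha>" "psd a \<alpha>'" using da da' density_psd unfolding a_def by auto
  have bp: "psd b \<beta>" "psd b \<beta>'" using db db' density_psd unfolding b_def by auto
  define Xd where "Xd = fst (game_F n m U \<alpha> \<beta>) - fst (game_F n m U \<alpha>' \<beta>')"
  define Yd where "Yd = snd (game_F n m U \<alpha> \<beta>) - snd (game_F n m U \<alpha>' \<beta>')"
  have Xd: "Xd = ptrace_B a b (madj U * kron (1\<^sub>m a) \<beta>) - ptrace_B a b (madj U * kron (1\<^sub>m a) \<beta>')"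
    unfolding Xd_def game_F_def a_def b_def by simp
  have Yd: "Yd = - ptrace_A a b (madj U * kron \<alpha> (1\<^sub>m b)) - - ptrace_A a b (madj U * kron \<alpha>' (1\<^sub>m b))"
    unfolding Yd_def game_F_def a_def b_def by simp
  have Xc: "Xd \<in> carrier_mat a a" unfolding Xd by (rule minus_carrier_mat[OF ptB_carrier])
  have Yc: "Yd \<in> carrier_mat b b" unfolding Yd by (rule minus_carrier_mat, rule uminus_carrier_mat[OF ptA_carrier])
  define Da where "Da = \<alpha> - \<alpha>'"
  define Db where "Db = \<beta> - \<beta>'"
  have Dac: "Da \<in> carrier_mat a a" unfolding Da_def using ac(2) by (rule minus_carrier_mat)
  have Dbc: "Db \<in> carrier_mat b b" unfolding Db_def using bc(2) by (rule minus_carrier_mat)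
  have Dae: "Da $$ (j, i) = cnj (Da $$ (i, j))" if "i < a" "j < a" for i j
    unfolding Da_def using that ac psd_herm[OF ap(1) that] psd_herm[OF ap(2) that] by simp
  have Dbe: "Db $$ (j, i) = cnj (Db $$ (i, j))" if "i < b" "j < b" for i j
    unfolding Db_def using that bc psd_herm[OF bp(1) that] psd_herm[OF bp(2) that] by simp
  define Mz where "Mz = blockdiag Da Db"
  have Mzc: "Mz \<in> carrier_mat (a+b) (a+b)" unfolding Mz_def by (rule blockdiag_carrier[OF Dac Dbc])
  have H: "herm (a+b) Mz"
    unfolding herm_def
  proof (intro conjI Mzc allI impI)
    fix i j assume i: "i < a+b" and j: "j < a+b"
    show "Mz $$ (j, i) = cnj (Mz $$ (i, j))"
    proof (cases "i < a")
      case True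
      then show ?thesis
      proof (cases "j < a")
        case True
        then show ?thesis unfolding Mz_def using blockdiag_index[OF Dac Dbc i j] blockdiag_index[OF Dac Dbc j i]
            Dae[OF \<open>i < a\<close> True] \<open>i < a\<close> by simp
      next
        case False
        then show ?thesis unfolding Mz_def using blockdiag_index[OF Dac Dbc i j] blockdiag_index[OF Dac Dbc j i]
            \<open>i < a\<close> by simp
      qed
    next
      case False
      then show ?thesis
      proof (cases "j < a")
        case True
        then show ?thesis unfolding Mz_def using blockdiag_index[OF Dac Dbc i j] blockdiag_index[OF Dac Dbc j i]
            \<open>\<not> i < a\<close> by simp
      next
        case False
        have "i - a < b" "j - a < b" using i j \<open>\<not> i < a\<close> False by auto
        then show ?thesis unfolding Mz_def using blockdiag_index[OF Dac Dbc i j] blockdiag_index[OF Dac Dbc j i]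
            Dbe[of "i - a" "j - a"] \<open>\<not> i < a\<close> False by simp
      qed
    qed
  qed
  obtain wf lam where O: "orthon (a+b) (a+b) wf"
    and dec: "\<And>i j. i < a+b \<Longrightarrow> j < a+b \<Longrightarrow> Mz $$ (i, j) = (\<Sum>r<a+b. complex_of_real (lam r) * wf r i * cnj (wf r j))"
    and tn: "trace_norm Mz = (\<Sum>r<a+b. \<bar>lam r\<bar>)"
    using spectral[OF H] by blast
  define T where "T = (\<Sum>r<a+b. \<bar>lam r\<bar>)"
  have T0: "0 \<le> T" unfolding T_def by (intro sum_nonneg) auto
  have n1: "nsq (a+b) (wf r) = 1" if r: "r < a+b" for r
  proof -
    have "complex_of_real (nsq (a+b) (wf r)) = 1" using O r unfolding orthon_def ip_self[symmetric] by simp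
    then show ?thesis by (metis of_real_eq_1_iff)
  qed
  have wa: "nsq a (wf r) \<le> 1" if r: "r < a+b" for r
    using n1[OF r] nsq_nonneg[of b "\<lambda>i. wf r (a+i)"] unfolding nsq_split by simp
  have wb: "nsq b (\<lambda>s. wf r (a+s)) \<le> 1" if r: "r < a+b" for r
    using n1[OF r] nsq_nonneg[of a "wf r"] unfolding nsq_split by simp
  have Dbdec: "Db $$ (s, k) = (\<Sum>r<a+b. complex_of_real (lam r) * wf r (a+s) * cnj (wf r (a+k)))"
    if s: "s < b" and k: "k < b" for s k
  proof -
    have "Mz $$ (a+s, a+k) = Db $$ (s, k)"
      unfolding Mz_def using blockdiag_index[OF Dac Dbc, of "a+s" "a+k"] s k by simp
    then show ?thesis using dec[of "a+s" "a+k"] s k by simp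
  qed
  have Dadec: "Da $$ (l, k) = (\<Sum>r<a+b. complex_of_real (lam r) * wf r l * cnj (wf r k))"
    if l: "l < a" and k: "k < a" for l k
  proof -
    have "Mz $$ (l, k) = Da $$ (l, k)"
      unfolding Mz_def using blockdiag_index[OF Dac Dbc, of l k] l k by simp
    then show ?thesis using dec[of l k] l k by simp
  qed
  have bX: "cmod (bil a a Xd y v) \<le> T * (sqrt (nsq a y) * sqrt (nsq a v))" for y v
    unfolding T_def
  proof (rule X_bil_bound[OF Ub, where w = "\<lambda>r s. wf r (a+s)"])
    fix i j assume i: "i < a" and j: "j < a"
    show "Xd $$ (i, j) = (\<Sum>k<b. \<Sum>s<b. cnj (U $$ (j*b+s, i*b+k)) *
          (\<Sum>r<a+b. complex_of_real (lam r) * wf r (a+s) * cnj (wf r (a+k))))"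
      unfolding Xd Xd_entry[OF Uc bc i j] Db_def[symmetric]
      by (intro sum.cong refl) (simp add: Dbdec)
  next
    fix r assume "r < a+b"
    then show "nsq b (\<lambda>s. wf r (a+s)) \<le> 1" by (rule wb)
  qed
  have bY: "cmod (bil b b Yd y v) \<le> T * (sqrt (nsq b y) * sqrt (nsq b v))" for y v
  proof -
    have "cmod (bil b b Yd y v) = cmod (bil b b (- Yd) y v)" unfolding bil_uminus[OF Yc] by simp
    also have "\<dots> \<le> T * (sqrt (nsq b y) * sqrt (nsq b v))"
      unfolding T_def
    proof (rule Y_bil_bound[OF Ub, where w = wf])
      fix i j assume i: "i < b" and j: "j < b"
      show "(- Yd) $$ (i, j) = (\<Sum>k<a. \<Sum>s<a. cnj (U $$ (s*b+j, k*b+i)) *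
            (\<Sum>r<a+b. complex_of_real (lam r) * wf r s * cnj (wf r k)))"
        unfolding Yd Yd_entry[OF Uc ac i j] Da_def[symmetric]
        by (intro sum.cong refl) (simp add: Dadec)
    next
      fix r assume "r < a+b"
      then show "nsq a (wf r) \<le> 1" by (rule wa)
    qed
    finally show ?thesis .
  qed
  have "op_norm (blockdiag Xd Yd) \<le> 2 * T"
    by (rule op_norm_blockdiag[OF Xc Yc T0 bX bY])
  also have "T = trace_norm (blockdiag Da Db)" unfolding T_def tn[symmetric] Mz_def ..
  finally show ?thesis unfolding Xd_def Yd_def Da_def Db_def .
qed

theorem mainTheorem5:
  shows
  "(\<exists>C::real. \<forall>(n::nat) (m::nat) (Omega::nat set) (P::nat \<Rightarrow> complex mat) (u::nat \<Rightarrow> real)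
        \<alpha> \<beta> \<alpha>' \<beta>'.
      povm (2^(n+m)) Omega P \<longrightarrow> (\<forall>w\<in>Omega. \<bar>u w\<bar> \<le> 1) \<longrightarrow>
      density (2^n) \<alpha> \<longrightarrow> density (2^m) \<beta> \<longrightarrow>
      density (2^n) \<alpha>' \<longrightarrow> density (2^m) \<beta>' \<longrightarrow>
      (let U = payoff_obs (2^(n+m)) Omega P u;
           FZ = game_F n m U \<alpha> \<beta>; FZ' = game_F n m U \<alpha>' \<beta>'
       in frob_norm (blockdiag (fst FZ - fst FZ') (snd FZ - snd FZ'))
            \<le> C * 2^(n+m) * frob_norm (blockdiag (\<alpha> - \<alpha>') (\<beta> - \<beta>'))))
 \<and> (\<exists>C::real. \<forall>(n::nat) (m::nat) (Omega::nat set) (P::nat \<Rightarrow> complex mat) (u::nat \<Rightarrow> real)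
        \<alpha> \<beta> \<alpha>' \<beta>'.
      povm (2^(n+m)) Omega P \<longrightarrow> (\<forall>w\<in>Omega. \<bar>u w\<bar> \<le> 1) \<longrightarrow>
      density (2^n) \<alpha> \<longrightarrow> density (2^m) \<beta> \<longrightarrow>
      density (2^n) \<alpha>' \<longrightarrow> density (2^m) \<beta>' \<longrightarrow>
      (let U = payoff_obs (2^(n+m)) Omega P u;
           FZ = game_F n m U \<alpha> \<beta>; FZ' = game_F n m U \<alpha>' \<beta>'
       in op_norm (blockdiag (fst FZ - fst FZ') (snd FZ - snd FZ'))
            \<le> C * trace_norm (blockdiag (\<alpha> - \<alpha>') (\<beta> - \<beta>'))))"
proof (rule conjI)
  show "\<exists>C::real. \<forall>(n::nat) (m::nat) (Omega::nat set) (P::nat \<Rightarrow> complex mat) (u::nat \<Rightarrow> real)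
        \<alpha> \<beta> \<alpha>' \<beta>'.
      povm (2^(n+m)) Omega P \<longrightarrow> (\<forall>w\<in>Omega. \<bar>u w\<bar> \<le> 1) \<longrightarrow>
      density (2^n) \<alpha> \<longrightarrow> density (2^m) \<beta> \<longrightarrow>
      density (2^n) \<alpha>' \<longrightarrow> density (2^m) \<beta>' \<longrightarrow>
      (let U = payoff_obs (2^(n+m)) Omega P u;
           FZ = game_F n m U \<alpha> \<beta>; FZ' = game_F n m U \<alpha>' \<beta>'
       in frob_norm (blockdiag (fst FZ - fst FZ') (snd FZ - snd FZ'))
            \<le> C * 2^(n+m) * frob_norm (blockdiag (\<alpha> - \<alpha>') (\<beta> - \<beta>')))"
  proof (intro exI[of _ 1] allI impI)
    fix n m :: nat and Omega :: "nat set" and P :: "nat \<Rightarrow> complex mat" and u :: "nat \<Rightarrow> real"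
      and \<alpha> \<beta> \<alpha>' \<beta>'
    assume h: "povm (2^(n+m)) Omega P" "\<forall>w\<in>Omega. \<bar>u w\<bar> \<le> 1" "density (2^n) \<alpha>" "density (2^m) \<beta>"
      "density (2^n) \<alpha>'" "density (2^m) \<beta>'"
    show "let U = payoff_obs (2^(n+m)) Omega P u;
           FZ = game_F n m U \<alpha> \<beta>; FZ' = game_F n m U \<alpha>' \<beta>'
       in frob_norm (blockdiag (fst FZ - fst FZ') (snd FZ - snd FZ'))
            \<le> 1 * 2^(n+m) * frob_norm (blockdiag (\<alpha> - \<alpha>') (\<beta> - \<beta>'))"
      unfolding Let_def using part1[OF h] by simp
  qed
next
  show "\<exists>C::real. \<forall>(n::nat) (m::nat) (Omega::nat set) (P::nat \<Rightarrow> complex mat) (u::nat \<Rightarrow> real)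
        \<alpha> \<beta> \<alpha>' \<beta>'.
      povm (2^(n+m)) Omega P \<longrightarrow> (\<forall>w\<in>Omega. \<bar>u w\<bar> \<le> 1) \<longrightarrow>
      density (2^n) \<alpha> \<longrightarrow> density (2^m) \<beta> \<longrightarrow>
      density (2^n) \<alpha>' \<longrightarrow> density (2^m) \<beta>' \<longrightarrow>
      (let U = payoff_obs (2^(n+m)) Omega P u;
           FZ = game_F n m U \<alpha> \<beta>; FZ' = game_F n m U \<alpha>' \<beta>'
       in op_norm (blockdiag (fst FZ - fst FZ') (snd FZ - snd FZ'))
            \<le> C * trace_norm (blockdiag (\<alpha> - \<alpha>') (\<beta> - \<beta>')))"
  proof (intro exI[of _ 2] allI impI)
    fix n m :: nat and Omega :: "nat set" and P :: "nat \<Rightarrow> complex mat" and u :: "nat \<Rightarrow> real"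
      and \<alpha> \<beta> \<alpha>' \<beta>'
    assume h: "povm (2^(n+m)) Omega P" "\<forall>w\<in>Omega. \<bar>u w\<bar> \<le> 1" "density (2^n) \<alpha>" "density (2^m) \<beta>"
      "density (2^n) \<alpha>'" "density (2^m) \<beta>'"
    show "let U = payoff_obs (2^(n+m)) Omega P u;
           FZ = game_F n m U \<alpha> \<beta>; FZ' = game_F n m U \<alpha>' \<beta>'
       in op_norm (blockdiag (fst FZ - fst FZ') (snd FZ - snd FZ'))
            \<le> 2 * trace_norm (blockdiag (\<alpha> - \<alpha>') (\<beta> - \<beta>'))"
      unfolding Let_def using part2[OF h] by simp
  qed
qed

end
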